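(* Let $k\ge1$. For every rational transduction $g:\Sigma^*\rightharpoonup\Lambda^*$ and every $k$-lexicographic transduction $f:\Lambda^*\rightharpoonup\Gamma^*$, the composition $f\circ g$ is $k$-lexicographic.
   Context: A rational transduction is one computed by a functional finite state transducer, i.e. a pair $(A,\mu)$ with: - $A$ a (possibly non-deterministic) finite automaton over $\Sigma$; - $\mu$ assigning an output word in $\Lambda^*$ to each transition; such that all accepting runs on a given input produce the same concatenated output. That common output is the image of the input. Alphabets are finite. For words $u,v$ of equal length over alphabets $\Sigma_1,\Sigma_2$, $u\otimes v$ is the word over $\Sigma_1\times\Sigma_2$ with $(u\otimes v)[i]=(u[i],v[i])$. A transduction is a partial function $f:\Sigma^*\rightharpoonup\Gamma^*$. A simple transduction is a transduction $f=\sum_{i=1}^n L_i\triangleright w_i$, where $L_1,\dots,L_n\subseteq\Sigma^*$ are pairwise disjoint regular languages and each $w_i\in\Gamma^{\le 1}$ is a word of length at most 1. It satisfies $f(u)=w_i$ if $u\in L_i$, and $f(u)$ is undefined if $u\notin\bigcup_iL_i$. An ordered alphabet is a pair $\lambda=(B,\prec)$ with $B$ a finite set and $\prec$ a strict linear order on $B$. The order is extended to $B^n$ for each $n$ by: $u\prec v$ iff there is $i\le n$ with $u[i]\prec v[i]$ and $u[j]=v[j]$ for all $i<j\le n$ (most significant letter on the right). For a transduction $f:(\Sigma\times B)^*\rightharpoonup\Gamma^*$, the transduction $\mathsf{maplex}_\lambda f:\Sigma^*\rightharpoonup\Gamma^*$ maps $u$ to $f(u\otimes b_1)f(u\otimes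 b_2)\cdots f(u\otimes b_m)$, where $b_1\prec\cdots\prec b_m$ is the increasing enumeration of all of $B^{|u|}$. It is defined on $u$ iff every $f(u\otimes b_j)$ is defined. The classes are defined inductively: - $\mathsf{Lex}_0$ is the class of simple transductions; - $\mathsf{Lex}_{k+1}=\{\mathsf{maplex}_\lambda f: \lambda=(B,\prec)\text{ an ordered alphabet},\ f:(\Sigma\times B)^*\rightharpoonup\Gamma^*\text{ in }\mathsf{Lex}_k\}$; - $\mathsf{Lex}=\bigcup_k\mathsf{Lex}_k$, the lexicographic transductions. Elements of $\mathsf{Lex}_k$ are called $k$-lexicographic. *)

theory Defs
  imports Main
begin

text \<open>Partial functions (transductions) are modelled as functions into option.
Finite automata have states of type nat; a run of an automaton on a word u
is a list of states of length |u|+1.\<close>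

definition is_run :: "nat set \<Rightarrow> (nat \<times> 'a \<times> nat) set \<Rightarrow> nat set \<Rightarrow> nat set
    \<Rightarrow> 'a list \<Rightarrow> nat list \<Rightarrow> bool" where
  "is_run Q \<delta> I F u qs \<longleftrightarrow> length qs = Suc (length u) \<and> set qs \<subseteq> Q \<and>
     qs ! 0 \<in> I \<and> qs ! length u \<in> F \<and>
     (\<forall>i < length u. (qs ! i, u ! i, qs ! Suc i) \<in> \<delta>)"

definition is_nfa :: "'a set \<Rightarrow> nat set \<Rightarrow> (nat \<times> 'a \<times> nat) set \<Rightarrow> nat set \<Rightarrow> nat set \<Rightarrow> bool" where
  "is_nfa A Q \<delta> I F \<longleftrightarrow> finite Q \<and> \<delta> \<subseteq> Q \<times> A \<times> Q \<and> I \<subseteq> Q \<and> F \<subseteq> Q"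

definition regular_on :: "'a set \<Rightarrow> 'a list set \<Rightarrow> bool" where
  "regular_on A L \<longleftrightarrow> (\<exists>Q \<delta> I F. is_nfa A Q \<delta> I F \<and>
      L = {u. \<exists>qs. is_run Q \<delta> I F u qs})"

definition run_output :: "(nat \<times> 'a \<times> nat \<Rightarrow> 'b list) \<Rightarrow> 'a list \<Rightarrow> nat list \<Rightarrow> 'b list" where
  "run_output \<mu> u qs = concat (map (\<lambda>i. \<mu> (qs ! i, u ! i, qs ! Suc i)) [0..<length u])"

text \<open>Rational transduction: computed by a functional finite state transducer
(input alphabet = the finite type 'a).\<close>
definition rational :: "('a list \<Rightarrow> 'b list option) \<Rightarrow> bool" where
  "rational g \<longleftrightarrow> (\<exists>Q \<delta> I F \<mu>. is_nfa UNIV Q \<delta> I F \<and>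
     (\<forall>u. (g u = None \<longleftrightarrow> \<not> (\<exists>qs. is_run Q \<delta> I F u qs)) \<and>
          (\<forall>qs. is_run Q \<delta> I F u qs \<longrightarrow> g u = Some (run_output \<mu> u qs))))"

text \<open>Simple transductions over the input alphabet A (values outside A^* irrelevant
for our use; we require undefinedness there).\<close>
definition simple_on :: "'a set \<Rightarrow> ('a list \<Rightarrow> 'c list option) \<Rightarrow> bool" where
  "simple_on A h \<longleftrightarrow> (\<exists>P :: ('a list set \<times> 'c list) list.
     (\<forall>(L, w) \<in> set P. regular_on A L \<and> length w \<le> 1) \<and>
     (\<forall>i < length P. \<forall>j < length P. i \<noteq> j \<longrightarrow> fst (P ! i) \<inter> fst (P ! j) = {}) \<and>
     (\<forall>u. (h u = None \<longleftrightarrow> (\<forall>(L, w) \<in> set P. u \<notin> L)) \<and>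
          (\<forall>(L, w) \<in> set P. u \<in> L \<longrightarrow> h u = Some w)))"

text \<open>Order on B^n, most significant letter on the right.\<close>
definition word_lt :: "'b rel \<Rightarrow> 'b list \<Rightarrow> 'b list \<Rightarrow> bool" where
  "word_lt r u v \<longleftrightarrow> (\<exists>i < length u. (u ! i, v ! i) \<in> r \<and>
      (\<forall>j. i < j \<and> j < length u \<longrightarrow> u ! j = v ! j))"

definition enum_words :: "'b set \<Rightarrow> 'b rel \<Rightarrow> nat \<Rightarrow> 'b list list" where
  "enum_words B r n = (THE xs. set xs = {b. length b = n \<and> set b \<subseteq> B} \<and>
       sorted_wrt (word_lt r) xs)"

definition maplex :: "'b set \<Rightarrow> 'b rel \<Rightarrow> (('x \<times> 'b) list \<Rightarrow> 'c list option)
     \<Rightarrow> 'x list \<Rightarrow> 'c list option" where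
  "maplex B r f u = (let ws = enum_words B r (length u) in
      if (\<forall>b \<in> set ws. f (zip u b) \<noteq> None)
      then Some (concat (map (\<lambda>b. the (f (zip u b))) ws)) else None)"

text \<open>Iterated maplex. A letter of \<Sigma> \<times> B_1 \<times> ... \<times> B_j is encoded as (a, [b_1,...,b_j]).\<close>
fun lexmap :: "(nat set \<times> nat rel) list \<Rightarrow> (('a \<times> nat list) list \<Rightarrow> 'c list option)
     \<Rightarrow> ('a \<times> nat list) list \<Rightarrow> 'c list option" where
  "lexmap [] h = h"
| "lexmap ((B, r) # Ls) h =
     maplex B r (\<lambda>w. lexmap Ls h (map (\<lambda>((a, bs), b). (a, bs @ [b])) w))"

definition tuple_alphabet :: "(nat set \<times> nat rel) list \<Rightarrow> ('a \<times> nat list) set" where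
  "tuple_alphabet Ls = {(a, bs). length bs = length Ls \<and> (\<forall>i < length Ls. bs ! i \<in> fst (Ls ! i))}"

text \<open>Ordered alphabets are finite sets of
naturals with a strict linear order (every finite ordered alphabet is isomorphic to one).\<close>
definition lex :: "nat \<Rightarrow> ('a list \<Rightarrow> 'c list option) \<Rightarrow> bool" where
  "lex k f \<longleftrightarrow> (\<exists>Ls h. length Ls = k \<and>
      (\<forall>(B, r) \<in> set Ls. finite B \<and> strict_linear_order_on B r) \<and>
      simple_on (tuple_alphabet Ls) h \<and>
      f = (\<lambda>u. lexmap Ls h (map (\<lambda>a. (a, [])) u)))"

end

theory Submission
  imports Defs "HOL-Library.Countable"
begin

lemma word_lt_irrefl: assumes "irrefl r" shows "\<not> word_lt r u u"
  using assms by (auto simp: word_lt_def irrefl_def)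

lemma word_lt_trans:
  assumes "trans r" "word_lt r u v" "word_lt r v w" "length u = length v" "length v = length w"
  shows "word_lt r u w"
proof -
  from assms(2) obtain i where i: "i < length u" "(u!i, v!i) \<in> r" and i3: "\<And>j. i<j \<Longrightarrow> j<length u \<Longrightarrow> u!j = v!j"
    unfolding word_lt_def by blast
  from assms(3) obtain i' where i': "i' < length v" "(v!i', w!i') \<in> r" and i'3: "\<And>j. i'<j \<Longrightarrow> j<length v \<Longrightarrow> v!j = w!j"
    unfolding word_lt_def by blast
  have L: "length u = length v" "length v = length w" by fact+
  show ?thesis
  proof (cases i i' rule: linorder_cases)
    case less
    have e: "u!i' = v!i'" using i3[OF less] i'(1) L by simp
    have "(u!i', w!i') \<in> r" using e i'(2) by simp
    moreover have "\<forall>j. i'<j \<and> j<length u \<longrightarrow> u!j = w!j"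
      using i3 i'3 less L by (metis order.strict_trans)
    ultimately show ?thesis unfolding word_lt_def using i'(1) L by metis
  next
    case equal
    have "(u!i, w!i) \<in> r" using i(2) i'(2) equal assms(1) by (meson transD)
    moreover have "\<forall>j. i<j \<and> j<length u \<longrightarrow> u!j = w!j"
      using i3 i'3 equal L by metis
    ultimately show ?thesis unfolding word_lt_def using i(1) by blast
  next
    case greater
    have e: "v!i = w!i" using i'3[OF greater] i(1) L by simp
    have "(u!i, w!i) \<in> r" using e i(2) by simp
    moreover have "\<forall>j. i<j \<and> j<length u \<longrightarrow> u!j = w!j"
      using i3 i'3 greater L by (metis order.strict_trans)
    ultimately show ?thesis unfolding word_lt_def using i(1) by blast
  qed
qed

lemma word_lt_total:
  assumes "total_on B r" "length u = length v" "set u \<subseteq> B" "set v \<subseteq> B" "u \<noteq> v"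
  shows "word_lt r u v \<or> word_lt r v u"
proof -
  let ?D = "{i. i < length u \<and> u!i \<noteq> v!i}"
  have ne: "?D \<noteq> {}" using assms(2,5) nth_equalityI by blast
  have fin: "finite ?D" by simp
  define m where "m = Max ?D"
  have m: "m \<in> ?D" using Max_in[OF fin ne] m_def by simp
  have above: "\<forall>j. m < j \<and> j < length u \<longrightarrow> u!j = v!j"
    using Max_ge[OF fin] m_def by fastforce
  have "u!m \<in> B" "v!m \<in> B" using m assms(2,3,4) by auto
  then have "(u!m, v!m) \<in> r \<or> (v!m, u!m) \<in> r" using assms(1) m by (auto simp: total_on_def)
  moreover have "m < length u" using m by simp
  moreover have above2: "\<forall>j. m < j \<and> j < length v \<longrightarrow> v!j = u!j" using above assms(2) by simp
  moreover have "m < length v" using \<open>m < length u\<close> assms(2) by simp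
  ultimately show ?thesis unfolding word_lt_def using above by blast
qed

lemma sorted_wrt_unique:
  assumes "sorted_wrt R xs" "sorted_wrt R ys" "set xs = set ys"
    "\<forall>x\<in>set xs. \<not> R x x" "\<forall>x\<in>set xs. \<forall>y\<in>set xs. \<forall>z\<in>set xs. R x y \<longrightarrow> R y z \<longrightarrow> R x z"
  shows "xs = ys"
  using assms
proof (induction xs arbitrary: ys)
  case Nil then show ?case using Nil.prems(3) by simp
next
  case (Cons x xs)
  obtain y ys' where ys: "ys = y # ys'" using Cons.prems(3) by (cases ys) auto
  have sx: "\<forall>z\<in>set xs. R x z" "sorted_wrt R xs" using Cons.prems(1) by simp_all
  have sy: "\<forall>z\<in>set ys'. R y z" "sorted_wrt R ys'" using Cons.prems(2) ys by simp_all
  have irr: "\<not> R x x" using Cons.prems(4) by simp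
  have xy: "x = y"
  proof (rule ccontr)
    assume ne: "x \<noteq> y"
    have yx: "y \<in> set (x#xs)" using Cons.prems(3) ys by simp
    then have y1: "y \<in> set xs" using ne by simp
    have "x \<in> set (y#ys')" using Cons.prems(3) ys by (metis list.set_intros(1))
    then have x1: "x \<in> set ys'" using ne by simp
    have "R x y" using sx y1 by blast
    moreover have "R y x" using sy x1 by blast
    ultimately have "R x x" using Cons.prems(5) yx by (meson list.set_intros(1))
    then show False using irr by simp
  qed
  have "x \<notin> set xs" using sx irr by blast
  moreover have "x \<notin> set ys'" using sy irr xy by blast
  ultimately have se: "set xs = set ys'" using Cons.prems(3) ys xy
    by (metis insert_eq_iff list.simps(15) set_ConsD) 
  have "xs = ys'"
    apply (rule Cons.IH[OF sx(2) sy(2) se])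
    using Cons.prems(4) apply simp
    using Cons.prems(5) by (meson list.set_intros(2))
  then show ?case using ys xy by simp
qed
lemma sorted_exists:
  assumes "finite S" "S \<subseteq> D" "\<forall>x\<in>D. \<not> R x x"
    "\<forall>x\<in>D. \<forall>y\<in>D. \<forall>z\<in>D. R x y \<longrightarrow> R y z \<longrightarrow> R x z"
    "\<forall>x\<in>D. \<forall>y\<in>D. x \<noteq> y \<longrightarrow> R x y \<or> R y x"
  shows "\<exists>xs. set xs = S \<and> sorted_wrt R xs"
  using assms(1,2)
proof (induction S rule: finite_induct)
  case empty then show ?case by simp
next
  case (insert x A)
  have "A \<subseteq> D" using insert.prems by simp
  then obtain xs where xs: "set xs = A" "sorted_wrt R xs" using insert.IH by blast
  let ?ys = "filter (\<lambda>y. R y x) xs @ x # filter (\<lambda>y. R x y) xs"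
  have xD: "x \<in> D" and AD: "A \<subseteq> D" using insert.prems by auto
  have "set ?ys = insert x A"
    using xs assms(5) xD AD insert.hyps(2) by auto
  moreover have "sorted_wrt R ?ys"
    unfolding sorted_wrt_append using xs xD AD assms(4)
    by (auto simp: sorted_wrt_filter)
  ultimately show ?case by blast
qed

lemma enum_words_props:
  assumes "finite B" "strict_linear_order_on B r"
  shows "set (enum_words B r n) = {b. length b = n \<and> set b \<subseteq> B} \<and> sorted_wrt (word_lt r) (enum_words B r n)"
    and "set xs = {b. length b = n \<and> set b \<subseteq> B} \<Longrightarrow> sorted_wrt (word_lt r) xs \<Longrightarrow> enum_words B r n = xs"
proof -
  let ?W = "{b. length b = n \<and> set b \<subseteq> B}"
  have tr: "trans r" and irr: "irrefl r" and tot: "total_on B r"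
    using assms(2) by (auto simp: strict_linear_order_on_def)
  have fin: "finite ?W" using finite_lists_length_eq[OF assms(1), of n] by (simp add: conj_commute)
  have P1: "\<forall>x\<in>?W. \<not> word_lt r x x" using word_lt_irrefl[OF irr] by (intro ballI)
  have P2: "\<forall>x\<in>?W. \<forall>y\<in>?W. \<forall>z\<in>?W. word_lt r x y \<longrightarrow> word_lt r y z \<longrightarrow> word_lt r x z"
  proof (intro ballI impI)
    fix x y z assume "x \<in> ?W" "y \<in> ?W" "z \<in> ?W" "word_lt r x y" "word_lt r y z"
    then show "word_lt r x z" using word_lt_trans[OF tr, of x y z] by (simp only: mem_Collect_eq)
  qed
  have P3: "\<forall>x\<in>?W. \<forall>y\<in>?W. x \<noteq> y \<longrightarrow> word_lt r x y \<or> word_lt r y x"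
  proof (intro ballI impI)
    fix x y assume "x \<in> ?W" "y \<in> ?W" "x \<noteq> y"
    then show "word_lt r x y \<or> word_lt r y x" using word_lt_total[OF tot, of x y] by (simp only: mem_Collect_eq) blast
  qed
  obtain ys where ys: "set ys = ?W" "sorted_wrt (word_lt r) ys"
    using sorted_exists[OF fin subset_refl P1 P2 P3] by (elim exE conjE)
  have uniq: "\<And>zs. set zs = ?W \<Longrightarrow> sorted_wrt (word_lt r) zs \<Longrightarrow> zs = ys"
  proof -
    fix zs assume a: "set zs = ?W" "sorted_wrt (word_lt r) zs"
    show "zs = ys"
      apply (rule sorted_wrt_unique[OF a(2) ys(2)])
      unfolding a(1) ys(1) by (rule refl P1 P2)+
  qed
  have ex1: "\<exists>!zs. set zs = ?W \<and> sorted_wrt (word_lt r) zs"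
  proof (rule ex1I[of _ ys])
    show "set ys = ?W \<and> sorted_wrt (word_lt r) ys" using ys by (rule conjI)
    fix zs assume "set zs = ?W \<and> sorted_wrt (word_lt r) zs"
    then show "zs = ys" using uniq by (elim conjE)
  qed
  have th: "set (enum_words B r n) = ?W \<and> sorted_wrt (word_lt r) (enum_words B r n)"
    unfolding enum_words_def by (rule theI'[OF ex1])
  then show "set (enum_words B r n) = ?W \<and> sorted_wrt (word_lt r) (enum_words B r n)" .
  show "set xs = ?W \<Longrightarrow> sorted_wrt (word_lt r) xs \<Longrightarrow> enum_words B r n = xs"
  proof -
    assume a: "set xs = ?W" "sorted_wrt (word_lt r) xs"
    have "xs = ys" using uniq[OF a] .
    moreover have "enum_words B r n = ys" using th by (elim conjE uniq)
    ultimately show ?thesis by simp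
  qed
qed

fun acc :: "('s \<times> 'a \<times> 's) set \<Rightarrow> 's set \<Rightarrow> 's \<Rightarrow> 'a list \<Rightarrow> bool" where
  "acc D Fn s [] \<longleftrightarrow> s \<in> Fn"
| "acc D Fn s (a#w) \<longleftrightarrow> (\<exists>s'. (s,a,s') \<in> D \<and> acc D Fn s' w)"

lemma is_run_Nil: "is_run Q \<delta> I F [] qs \<longleftrightarrow> (\<exists>q. qs = [q] \<and> q \<in> Q \<and> q \<in> I \<and> q \<in> F)"
proof
  assume "is_run Q \<delta> I F [] qs"
  then have "length qs = 1" "set qs \<subseteq> Q" "qs!0 \<in> I" "qs!0 \<in> F" by (simp_all add: is_run_def)
  moreover have e: "qs = [qs!0]" using \<open>length qs = 1\<close> by (cases qs) auto
  ultimately have "qs!0 \<in> Q" by (metis list.set_intros(1) subsetD)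
  then show "\<exists>q. qs = [q] \<and> q \<in> Q \<and> q \<in> I \<and> q \<in> F"
    using e \<open>qs!0 \<in> I\<close> \<open>qs!0 \<in> F\<close> by blast
next
  assume "\<exists>q. qs = [q] \<and> q \<in> Q \<and> q \<in> I \<and> q \<in> F"
  then show "is_run Q \<delta> I F [] qs" by (auto simp: is_run_def)
qed

lemma is_run_Cons: "is_run Q \<delta> I F (a#w) (q#qs) \<longleftrightarrow>
   q \<in> I \<and> q \<in> Q \<and> (q, a, qs!0) \<in> \<delta> \<and> is_run Q \<delta> {qs!0} F w qs"
proof -
  have A: "(\<forall>i < Suc (length w). ((q#qs) ! i, (a#w) ! i, (q#qs) ! Suc i) \<in> \<delta>) \<longleftrightarrow>
     (q, a, qs!0) \<in> \<delta> \<and> (\<forall>i < length w. (qs ! i, w ! i, qs ! Suc i) \<in> \<delta>)"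
    by (simp add: All_less_Suc2)
  show ?thesis unfolding is_run_def using A by auto
qed

lemma is_run_ne: "is_run Q \<delta> I F w qs \<Longrightarrow> qs \<noteq> []"
  by (auto simp: is_run_def)

lemma is_run_start: "is_run Q \<delta> I F w qs \<longleftrightarrow> qs!0 \<in> I \<and> is_run Q \<delta> {qs!0} F w qs"
  by (auto simp: is_run_def)

lemma run_acc:
  assumes "\<delta> \<subseteq> Q \<times> A \<times> Q" "F \<subseteq> Q"
  shows "(\<exists>qs. is_run Q \<delta> {q} F w qs) \<longleftrightarrow> q \<in> Q \<and> acc \<delta> F q w"
proof (induction w arbitrary: q)
  case Nil
  show ?case by (simp add: is_run_Nil)
next
  case (Cons a w)
  have "(\<exists>qs. is_run Q \<delta> {q} F (a#w) qs) \<longleftrightarrow>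
        (\<exists>qs. q \<in> Q \<and> (q, a, qs!0) \<in> \<delta> \<and> is_run Q \<delta> {qs!0} F w qs)"
  proof
    assume "\<exists>qs. is_run Q \<delta> {q} F (a#w) qs"
    then obtain qs where r: "is_run Q \<delta> {q} F (a#w) qs" by blast
    then obtain q0 qs' where qs: "qs = q0 # qs'" using is_run_ne by (metis list.exhaust)
    then show "\<exists>qs. q \<in> Q \<and> (q, a, qs!0) \<in> \<delta> \<and> is_run Q \<delta> {qs!0} F w qs"
      using r is_run_Cons[of Q \<delta> "{q}" F a w q0 qs'] by auto
  next
    assume "\<exists>qs. q \<in> Q \<and> (q, a, qs!0) \<in> \<delta> \<and> is_run Q \<delta> {qs!0} F w qs"
    then obtain qs where "q \<in> Q \<and> (q, a, qs!0) \<in> \<delta> \<and> is_run Q \<delta> {qs!0} F w qs" by blast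
    then have "is_run Q \<delta> {q} F (a#w) (q#qs)" using is_run_Cons[of Q \<delta> "{q}" F a w q qs] by simp
    then show "\<exists>qs. is_run Q \<delta> {q} F (a#w) qs" by blast
  qed
  also have "\<dots> \<longleftrightarrow> q \<in> Q \<and> (\<exists>q'. (q, a, q') \<in> \<delta> \<and> (\<exists>qs. is_run Q \<delta> {q'} F w qs))"
  proof
    assume "\<exists>qs. q \<in> Q \<and> (q, a, qs!0) \<in> \<delta> \<and> is_run Q \<delta> {qs!0} F w qs"
    then show "q \<in> Q \<and> (\<exists>q'. (q, a, q') \<in> \<delta> \<and> (\<exists>qs. is_run Q \<delta> {q'} F w qs))" by blast
  next
    assume "q \<in> Q \<and> (\<exists>q'. (q, a, q') \<in> \<delta> \<and> (\<exists>qs. is_run Q \<delta> {q'} F w qs))"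
    then obtain q' qs where "q \<in> Q" "(q, a, q') \<in> \<delta>" "is_run Q \<delta> {q'} F w qs" by blast
    moreover then have "qs!0 = q'" by (simp add: is_run_def)
    ultimately show "\<exists>qs. q \<in> Q \<and> (q, a, qs!0) \<in> \<delta> \<and> is_run Q \<delta> {qs!0} F w qs" by blast
  qed
  also have "\<dots> \<longleftrightarrow> q \<in> Q \<and> (\<exists>q'. (q, a, q') \<in> \<delta> \<and> acc \<delta> F q' w)"
    using Cons.IH assms(1) by blast
  finally show ?case by simp
qed

lemma run_acc_I:
  assumes "\<delta> \<subseteq> Q \<times> A \<times> Q" "F \<subseteq> Q" "I \<subseteq> Q"
  shows "(\<exists>qs. is_run Q \<delta> I F w qs) \<longleftrightarrow> (\<exists>q\<in>I. acc \<delta> F q w)"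
proof -
  have "(\<exists>qs. is_run Q \<delta> I F w qs) \<longleftrightarrow> (\<exists>q\<in>I. \<exists>qs. is_run Q \<delta> {q} F w qs)"
  proof
    assume "\<exists>qs. is_run Q \<delta> I F w qs"
    then obtain qs where "is_run Q \<delta> I F w qs" by blast
    then show "\<exists>q\<in>I. \<exists>qs. is_run Q \<delta> {q} F w qs" using is_run_start by blast
  next
    assume "\<exists>q\<in>I. \<exists>qs. is_run Q \<delta> {q} F w qs"
    then obtain q qs where "q \<in> I" "is_run Q \<delta> {q} F w qs" by blast
    then show "\<exists>qs. is_run Q \<delta> I F w qs" by (auto simp: is_run_def)
  qed
  also have "\<dots> \<longleftrightarrow> (\<exists>q\<in>I. acc \<delta> F q w)"
    using run_acc[OF assms(1,2)] assms(3) by blast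
  finally show ?thesis .
qed

lemma regular_acc:
  assumes "regular_on A L"
  shows "\<exists>(Q::nat set) \<delta> I F. finite Q \<and> \<delta> \<subseteq> Q \<times> A \<times> Q \<and> I \<subseteq> Q \<and> F \<subseteq> Q \<and> L = {w. \<exists>q\<in>I. acc \<delta> F q w}"
proof -
  obtain Q \<delta> I F where n: "is_nfa A Q \<delta> I F" and L: "L = {u. \<exists>qs. is_run Q \<delta> I F u qs}"
    using assms unfolding regular_on_def by blast
  have h: "finite Q" "\<delta> \<subseteq> Q \<times> A \<times> Q" "I \<subseteq> Q" "F \<subseteq> Q" using n by (auto simp: is_nfa_def)
  have LL: "L = {w. \<exists>q\<in>I. acc \<delta> F q w}" unfolding L by (rule Collect_cong, rule run_acc_I[OF h(2,4,3)])
  show ?thesis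
    by (rule exI[of _ Q], rule exI[of _ \<delta>], rule exI[of _ I], rule exI[of _ F]) (intro conjI h LL)
qed

lemma acc_enc:
  assumes "inj_on e S" "D \<subseteq> S \<times> A \<times> S" "Fn \<subseteq> S" "s \<in> S"
  shows "acc {(e x, a, e y) | x a y. (x, a, y) \<in> D} (e ` Fn) (e s) w \<longleftrightarrow> acc D Fn s w"
  using assms(4)
proof (induction w arbitrary: s)
  case Nil
  then show ?case using assms(1,3) by (auto simp: inj_on_eq_iff)
next
  case (Cons a w)
  let ?D = "{(e x, a, e y) | x a y. (x, a, y) \<in> D}"
  show ?case
  proof
    assume "acc ?D (e ` Fn) (e s) (a # w)"
    then obtain q' where q': "(e s, a, q') \<in> ?D" "acc ?D (e ` Fn) q' w" unfolding acc.simps by blast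
    then obtain x y where xy: "e s = e x" "q' = e y" "(x, a, y) \<in> D" by blast
    have "x \<in> S" "y \<in> S" using xy(3) assms(2) by auto
    then have "x = s" using xy(1) Cons.prems assms(1) by (simp add: inj_on_eq_iff)
    have "acc D Fn y w" using Cons.IH[OF \<open>y \<in> S\<close>] q'(2) xy(2) by simp
    then show "acc D Fn s (a # w)" unfolding acc.simps using xy(3) \<open>x = s\<close> by blast
  next
    assume "acc D Fn s (a # w)"
    then obtain y where y: "(s, a, y) \<in> D" "acc D Fn y w" by auto
    have "y \<in> S" using y(1) assms(2) by auto
    have "(e s, a, e y) \<in> ?D" using y(1) by blast
    moreover have "acc ?D (e ` Fn) (e y) w" using Cons.IH[OF \<open>y \<in> S\<close>] y(2) by simp
    ultimately show "acc ?D (e ` Fn) (e s) (a # w)" unfolding acc.simps by blast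
  qed
qed

lemma acc_regular:
  fixes D :: "('s \<times> 'a \<times> 's) set"
  assumes "finite S" "D \<subseteq> S \<times> A \<times> S" "I \<subseteq> S" "Fn \<subseteq> S"
  shows "regular_on A {w. \<exists>s\<in>I. acc D Fn s w}"
proof -
  obtain e :: "'s \<Rightarrow> nat" where e: "inj_on e S"
    using finite_imp_inj_to_nat_seg[OF assms(1)] by blast
  let ?Q = "e ` S" and ?D = "{(e x, a, e y) | x a y. (x, a, y) \<in> D}"
  have nfa: "is_nfa A ?Q ?D (e ` I) (e ` Fn)"
    unfolding is_nfa_def using assms by blast
  have d: "?D \<subseteq> ?Q \<times> A \<times> ?Q" using assms(2) by blast
  have "{u. \<exists>qs. is_run ?Q ?D (e ` I) (e ` Fn) u qs} = {w. \<exists>q\<in>e ` I. acc ?D (e ` Fn) q w}"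
    by (rule Collect_cong, rule run_acc_I[OF d]) (use assms(3,4) in blast)+
  also have "\<dots> = {w. \<exists>s\<in>I. acc D Fn s w}"
  proof (rule Collect_cong)
    fix w show "(\<exists>q\<in>e ` I. acc ?D (e ` Fn) q w) \<longleftrightarrow> (\<exists>s\<in>I. acc D Fn s w)"
      using acc_enc[OF e assms(2,4)] assms(3) by blast
  qed
  finally have "{u. \<exists>qs. is_run ?Q ?D (e ` I) (e ` Fn) u qs} = {w. \<exists>s\<in>I. acc D Fn s w}" .
  then show ?thesis unfolding regular_on_def
    by (intro exI[of _ ?Q] exI[of _ ?D] exI[of _ "e ` I"] exI[of _ "e ` Fn"] conjI nfa) (rule sym)
qed

lemma acc_append:
  "acc D Fn s (x @ y) \<longleftrightarrow> (\<exists>s'. acc D {s'} s x \<and> acc D Fn s' y)"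
  by (induction x arbitrary: s) auto

lemma acc_in:
  assumes "D \<subseteq> S \<times> A \<times> S" "s \<in> S" "acc D {s'} s x"
  shows "s' \<in> S"
  using assms(2,3) by (induction x arbitrary: s) (use assms(1) in auto)

lemma run_output_Cons: "run_output \<mu> (a#w) (q#qs) = \<mu> (q, a, qs!0) @ run_output \<mu> w qs"
  unfolding run_output_def
  by (simp add: upt_conv_Cons map_Suc_upt[symmetric] o_def del: upt_Suc)

lemma run_output_Nil: "run_output \<mu> [] qs = []"
  unfolding run_output_def by simp

locale trd =
  fixes Q :: "nat set" and \<delta> :: "(nat \<times> 'a \<times> nat) set" and I F :: "nat set"
    and \<mu> :: "nat \<times> 'a \<times> nat \<Rightarrow> 'b list"
  assumes nfa: "is_nfa UNIV Q \<delta> I F" and fin_delta: "finite \<delta>"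
begin

lemma finQ: "finite Q" and dQ: "\<delta> \<subseteq> Q \<times> UNIV \<times> Q" and IQ: "I \<subseteq> Q" and FQ: "F \<subseteq> Q"
  using nfa by (auto simp: is_nfa_def)

definition co :: "'a list \<Rightarrow> nat set" where "co w = {q \<in> Q. acc \<delta> F q w}"

lemma co_sub: "co w \<subseteq> Q" unfolding co_def by blast

lemma co_Nil: "co [] = F" unfolding co_def using FQ by auto

lemma co_Cons: "co (a#w) = {q \<in> Q. \<exists>q'\<in>co w. (q,a,q') \<in> \<delta>}"
proof -
  have "\<And>q q'. (q,a,q') \<in> \<delta> \<Longrightarrow> q' \<in> Q" using dQ by blast
  then show ?thesis unfolding co_def by auto
qed

definition nxt :: "nat \<Rightarrow> 'a \<Rightarrow> 'a list \<Rightarrow> nat" where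
  "nxt q a w = Min {y \<in> co w. (q,a,y) \<in> \<delta>}"

lemma nxt:
  assumes "q \<in> co (a#w)"
  shows "nxt q a w \<in> co w" "(q, a, nxt q a w) \<in> \<delta>"
proof -
  let ?S = "{y \<in> co w. (q,a,y) \<in> \<delta>}"
  have "?S \<noteq> {}" using assms unfolding co_Cons by blast
  moreover have "finite ?S" by (rule finite_subset[OF _ finQ]) (use co_sub in blast)
  ultimately have "Min ?S \<in> ?S" by (rule Min_in[rotated])
  then show "nxt q a w \<in> co w" "(q, a, nxt q a w) \<in> \<delta>" unfolding nxt_def by auto
qed

fun grun :: "nat \<Rightarrow> 'a list \<Rightarrow> nat list" where
  "grun q [] = [q]"
| "grun q (a#w) = q # grun (nxt q a w) w"

fun outs :: "nat \<Rightarrow> 'a list \<Rightarrow> 'b list list" where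
  "outs q [] = []"
| "outs q (a#w) = \<mu> (q, a, nxt q a w) # outs (nxt q a w) w"

lemma grun_0: "grun q w ! 0 = q" by (cases w) auto

lemma length_outs[simp]: "length (outs q w) = length w"
  by (induction w arbitrary: q) auto

lemma grun_run:
  assumes "q \<in> co w"
  shows "is_run Q \<delta> {q} F w (grun q w) \<and> run_output \<mu> w (grun q w) = concat (outs q w)"
  using assms
proof (induction w arbitrary: q)
  case Nil
  then have "q \<in> F" "q \<in> Q" using co_Nil FQ by auto
  then show ?case by (simp add: is_run_Nil run_output_Nil)
next
  case (Cons a w)
  let ?q' = "nxt q a w"
  have n: "?q' \<in> co w" "(q, a, ?q') \<in> \<delta>" using nxt[OF Cons.prems] by auto
  have ih: "is_run Q \<delta> {?q'} F w (grun ?q' w) \<and> run_output \<mu> w (grun ?q' w) = concat (outs ?q' w)"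
    using Cons.IH[OF n(1)] .
  have qQ: "q \<in> Q" using Cons.prems co_sub by blast
  have "is_run Q \<delta> {q} F (a#w) (q # grun ?q' w)"
    unfolding is_run_Cons grun_0 using ih n(2) qQ by simp
  moreover have "run_output \<mu> (a#w) (q # grun ?q' w) = concat (outs q (a#w))"
    unfolding run_output_Cons grun_0 using ih by simp
  ultimately show ?case by simp
qed

definition cmax :: nat where "cmax = Max ((\<lambda>t. length (\<mu> t)) ` \<delta>)"

lemma outs_bound:
  assumes "q \<in> co w" "ob \<in> set (outs q w)"
  shows "length ob \<le> cmax"
  using assms
proof (induction w arbitrary: q)
  case Nil then show ?case by simp
next
  case (Cons a w)
  have n: "nxt q a w \<in> co w" "(q, a, nxt q a w) \<in> \<delta>" using nxt[OF Cons.prems(1)] by auto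
  from Cons.prems(2) have "ob = \<mu> (q, a, nxt q a w) \<or> ob \<in> set (outs (nxt q a w) w)" by simp
  then show ?case
  proof
    assume "ob = \<mu> (q, a, nxt q a w)"
    then show ?thesis unfolding cmax_def using n(2) fin_delta by (simp add: Max_ge)
  next
    assume "ob \<in> set (outs (nxt q a w) w)"
    then show ?thesis using Cons.IH[OF n(1)] by simp
  qed
qed

lemma run_iff: "(\<exists>qs. is_run Q \<delta> I F u qs) \<longleftrightarrow> I \<inter> co u \<noteq> {}"
proof -
  have "(\<exists>qs. is_run Q \<delta> I F u qs) \<longleftrightarrow> (\<exists>q\<in>I. acc \<delta> F q u)" by (rule run_acc_I[OF dQ FQ IQ])
  also have "\<dots> \<longleftrightarrow> I \<inter> co u \<noteq> {}" unfolding co_def using IQ by blast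
  finally show ?thesis .
qed

definition rho0 :: "'a list \<Rightarrow> nat" where "rho0 u = Min (I \<inter> co u)"

lemma rho0: assumes "I \<inter> co u \<noteq> {}" shows "rho0 u \<in> I" "rho0 u \<in> co u"
proof -
  have "finite (I \<inter> co u)" using finQ IQ by (meson finite_Int finite_subset)
  then have "rho0 u \<in> I \<inter> co u" unfolding rho0_def using assms by (rule Min_in)
  then show "rho0 u \<in> I" "rho0 u \<in> co u" by auto
qed

lemma canonical_run:
  assumes "I \<inter> co u \<noteq> {}"
  shows "is_run Q \<delta> I F u (grun (rho0 u) u)" "run_output \<mu> u (grun (rho0 u) u) = concat (outs (rho0 u) u)"
proof -
  have g: "is_run Q \<delta> {rho0 u} F u (grun (rho0 u) u)" "run_output \<mu> u (grun (rho0 u) u) = concat (outs (rho0 u) u)"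
    using grun_run[OF rho0(2)[OF assms]] by auto
  show "is_run Q \<delta> I F u (grun (rho0 u) u)"
    using g(1) rho0(1)[OF assms] is_run_start grun_0 by metis
  show "run_output \<mu> u (grun (rho0 u) u) = concat (outs (rho0 u) u)" by (rule g(2))
qed

end

context trd begin

definition preim :: "'a \<Rightarrow> nat set \<Rightarrow> nat set" where
  "preim a R = {x \<in> Q. \<exists>y\<in>R. (x,a,y) \<in> \<delta>}"

lemma co_Cons': "co (a#w) = preim a (co w)" unfolding preim_def co_Cons ..

lemma nxt_def': "nxt q a w = Min {y \<in> co w. (q,a,y) \<in> \<delta>}" by (rule nxt_def)

definition bigS :: "'s set \<Rightarrow> (nat set \<times> nat \<times> 's) set" where
  "bigS Sa = {(R,q,s). R \<subseteq> Q \<and> q \<in> R \<and> s \<in> Sa}"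

definition bigD :: "'s set \<Rightarrow> ('s \<times> ('b list \<times> nat list) \<times> 's) set \<Rightarrow> ('a \<times> nat list) set
    \<Rightarrow> ((nat set \<times> nat \<times> 's) \<times> ('a \<times> nat list) \<times> (nat set \<times> nat \<times> 's)) set" where
  "bigD Sa Da A' = {((R,q,s),(a,bs),(R',q',s')) | R q s a bs R' q' s'.
      (R,q,s) \<in> bigS Sa \<and> (R',q',s') \<in> bigS Sa \<and> (a,bs) \<in> A' \<and> R = preim a R' \<and>
      q' = Min {y \<in> R'. (q,a,y) \<in> \<delta>} \<and> (s, (\<mu> (q,a,q'), bs), s') \<in> Da}"

definition bigF :: "'s set \<Rightarrow> 's set \<Rightarrow> (nat set \<times> nat \<times> 's) set" where
  "bigF Sa Fa = {(R,q,s). (R,q,s) \<in> bigS Sa \<and> R = F \<and> s \<in> Fa}"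

definition bigI :: "'s set \<Rightarrow> 's set \<Rightarrow> (nat set \<times> nat \<times> 's) set" where
  "bigI Sa Ia = {(R,q,s). (R,q,s) \<in> bigS Sa \<and> I \<inter> R \<noteq> {} \<and> q = Min (I \<inter> R) \<and> s \<in> Ia}"

lemma big_char:
  assumes Da: "Da \<subseteq> Sa \<times> UNIV \<times> Sa" and Fa: "Fa \<subseteq> Sa"
  shows "(R,q,s) \<in> bigS Sa \<Longrightarrow> acc (bigD Sa Da A') (bigF Sa Fa) (R,q,s) U \<longleftrightarrow>
     R = co (map fst U) \<and> U \<in> lists A' \<and> acc Da Fa s (zip (outs q (map fst U)) (map snd U))"
proof (induction U arbitrary: R q s)
  case Nil
  then show ?case by (auto simp: bigF_def co_Nil)
next
  case (Cons x U)
  obtain a bs where x: "x = (a, bs)" by (cases x)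
  let ?w = "map fst U"
  show ?case
  proof
    assume "acc (bigD Sa Da A') (bigF Sa Fa) (R,q,s) (x # U)"
    then obtain st' where st': "((R,q,s), x, st') \<in> bigD Sa Da A'" "acc (bigD Sa Da A') (bigF Sa Fa) st' U"
      by auto
    obtain R' q' s' where st'e: "st' = (R',q',s')" by (cases st')
    have D: "(R',q',s') \<in> bigS Sa" "(a,bs) \<in> A'" "R = preim a R'" "q' = Min {y \<in> R'. (q,a,y) \<in> \<delta>}"
       "(s, (\<mu> (q,a,q'), bs), s') \<in> Da"
      using st'(1) unfolding st'e x bigD_def by blast+
    have ih: "R' = co ?w \<and> U \<in> lists A' \<and> acc Da Fa s' (zip (outs q' ?w) (map snd U))"
      using Cons.IH[OF D(1)] st'(2) st'e by simp
    have R: "R = co (a # ?w)" using D(3) ih co_Cons' by simp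
    have q': "q' = nxt q a ?w" using D(4) ih unfolding nxt_def by simp
    have "acc Da Fa s ((\<mu> (q,a,q'), bs) # zip (outs q' ?w) (map snd U))"
      using D(5) ih by auto
    then show "R = co (map fst (x # U)) \<and> x # U \<in> lists A' \<and>
       acc Da Fa s (zip (outs q (map fst (x # U))) (map snd (x # U)))"
      using R q' ih D(2) x by simp
  next
    assume H: "R = co (map fst (x # U)) \<and> x # U \<in> lists A' \<and>
       acc Da Fa s (zip (outs q (map fst (x # U))) (map snd (x # U)))"
    let ?q' = "nxt q a ?w"
    have R: "R = co (a # ?w)" "(a,bs) \<in> A'" "U \<in> lists A'" using H x by auto
    have "acc Da Fa s ((\<mu> (q,a,?q'), bs) # zip (outs ?q' ?w) (map snd U))"
      using H x by simp
    then obtain s' where s': "(s, (\<mu> (q,a,?q'), bs), s') \<in> Da" "acc Da Fa s' (zip (outs ?q' ?w) (map snd U))"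
      by auto
    have qR: "q \<in> co (a # ?w)" using Cons.prems R(1) unfolding bigS_def by blast
    have n: "?q' \<in> co ?w" using nxt(1)[OF qR] .
    have s'S: "s' \<in> Sa" using s'(1) Da by blast
    have S': "(co ?w, ?q', s') \<in> bigS Sa" unfolding bigS_def using co_sub n s'S by blast
    have accU: "acc (bigD Sa Da A') (bigF Sa Fa) (co ?w, ?q', s') U"
      using Cons.IH[OF S'] s'(2) R(3) by simp
    have tr: "((R,q,s), (a,bs), (co ?w, ?q', s')) \<in> bigD Sa Da A'"
      unfolding bigD_def using Cons.prems S' R(1,2) s'(1) co_Cons'[of a ?w] nxt_def'[of q a ?w] by blast
    show "acc (bigD Sa Da A') (bigF Sa Fa) (R,q,s) (x # U)"
      unfolding x acc.simps using tr accU by blast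
  qed
qed

lemma big_regular:
  fixes Sa :: "'s set" and Da :: "('s \<times> ('b list \<times> nat list) \<times> 's) set"
  assumes fSa: "finite Sa" and Da: "Da \<subseteq> Sa \<times> UNIV \<times> Sa" and Fa: "Fa \<subseteq> Sa" and Ia: "Ia \<subseteq> Sa"
  shows "regular_on A' {U. U \<in> lists A' \<and> I \<inter> co (map fst U) \<noteq> {} \<and>
     (\<exists>s\<in>Ia. acc Da Fa s (zip (outs (rho0 (map fst U)) (map fst U)) (map snd U)))}"
proof -
  have finS: "finite (bigS Sa)"
    by (rule finite_subset[of _ "Pow Q \<times> Q \<times> Sa"]) (auto simp: bigS_def finQ fSa)
  have DS: "bigD Sa Da A' \<subseteq> bigS Sa \<times> A' \<times> bigS Sa" unfolding bigD_def by blast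
  have IS: "bigI Sa Ia \<subseteq> bigS Sa" unfolding bigI_def by blast
  have FS: "bigF Sa Fa \<subseteq> bigS Sa" unfolding bigF_def by blast
  have reg: "regular_on A' {U. \<exists>st\<in>bigI Sa Ia. acc (bigD Sa Da A') (bigF Sa Fa) st U}"
    by (rule acc_regular[OF finS DS IS FS])
  have eq: "{U. \<exists>st\<in>bigI Sa Ia. acc (bigD Sa Da A') (bigF Sa Fa) st U} =
    {U. U \<in> lists A' \<and> I \<inter> co (map fst U) \<noteq> {} \<and>
     (\<exists>s\<in>Ia. acc Da Fa s (zip (outs (rho0 (map fst U)) (map fst U)) (map snd U)))}"
  proof (rule Collect_cong)
    fix U :: "('a \<times> nat list) list"
    let ?u = "map fst U"
    show "(\<exists>st\<in>bigI Sa Ia. acc (bigD Sa Da A') (bigF Sa Fa) st U) \<longleftrightarrow>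
      (U \<in> lists A' \<and> I \<inter> co ?u \<noteq> {} \<and>
     (\<exists>s\<in>Ia. acc Da Fa s (zip (outs (rho0 ?u) ?u) (map snd U))))"
    proof
      assume "\<exists>st\<in>bigI Sa Ia. acc (bigD Sa Da A') (bigF Sa Fa) st U"
      then obtain R q s where st: "(R,q,s) \<in> bigI Sa Ia" "acc (bigD Sa Da A') (bigF Sa Fa) (R,q,s) U"
        by (metis prod_cases3)
      have SS: "(R,q,s) \<in> bigS Sa" "I \<inter> R \<noteq> {}" "q = Min (I \<inter> R)" "s \<in> Ia"
        using st(1) unfolding bigI_def by blast+
      have c: "R = co ?u \<and> U \<in> lists A' \<and> acc Da Fa s (zip (outs q ?u) (map snd U))"
        using big_char[OF Da Fa SS(1)] st(2) by blast
      then have "q = rho0 ?u" using SS(3) unfolding rho0_def by simp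
      then show "U \<in> lists A' \<and> I \<inter> co ?u \<noteq> {} \<and>
        (\<exists>s\<in>Ia. acc Da Fa s (zip (outs (rho0 ?u) ?u) (map snd U)))"
        using c SS(2,4) by blast
    next
      assume H: "U \<in> lists A' \<and> I \<inter> co ?u \<noteq> {} \<and>
        (\<exists>s\<in>Ia. acc Da Fa s (zip (outs (rho0 ?u) ?u) (map snd U)))"
      then obtain s where s: "s \<in> Ia" "acc Da Fa s (zip (outs (rho0 ?u) ?u) (map snd U))" by blast
      have ne: "I \<inter> co ?u \<noteq> {}" using H by blast
      have SS: "(co ?u, rho0 ?u, s) \<in> bigS Sa"
        unfolding bigS_def using co_sub rho0(2)[OF ne] s(1) Ia by blast
      have "(co ?u, rho0 ?u, s) \<in> bigI Sa Ia"
        unfolding bigI_def using SS ne s(1) rho0_def by blast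
      moreover have "acc (bigD Sa Da A') (bigF Sa Fa) (co ?u, rho0 ?u, s) U"
        using big_char[OF Da Fa SS] H s(2) by blast
      ultimately show "\<exists>st\<in>bigI Sa Ia. acc (bigD Sa Da A') (bigF Sa Fa) st U" by blast
    qed
  qed
  show ?thesis using reg unfolding eq .
qed

end

definition Wd :: "nat \<Rightarrow> nat set \<Rightarrow> nat list set" where
  "Wd c B = {w. length w \<le> c \<and> set w \<subseteq> B}"

definition Bp :: "nat \<Rightarrow> nat set \<Rightarrow> nat set" where
  "Bp c B = (to_nat :: nat list \<Rightarrow> nat) ` Wd c B"

definition rp :: "nat \<Rightarrow> nat set \<Rightarrow> nat rel \<Rightarrow> nat rel" where
  "rp c B r = {((to_nat :: nat list \<Rightarrow> nat) w1, to_nat w2) | w1 w2. w1 \<in> Wd c B \<and> w2 \<in> Wd c B \<and>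
      (length w1 < length w2 \<or> (length w1 = length w2 \<and> word_lt r w1 w2))}"

abbreviation dec :: "nat \<Rightarrow> nat list" where "dec \<equiv> from_nat"

definition Phi :: "nat list \<Rightarrow> nat list" where "Phi b = concat (map dec b)"

definition cvalid :: "nat list \<Rightarrow> nat list \<Rightarrow> bool" where
  "cvalid l b \<longleftrightarrow> (\<forall>i<length l. length (dec (b!i)) = l!i)"

lemma rp_mem:
  "((to_nat :: nat list \<Rightarrow> nat) w1, to_nat w2) \<in> rp c B r \<longleftrightarrow> w1 \<in> Wd c B \<and> w2 \<in> Wd c B \<and>
      (length w1 < length w2 \<or> (length w1 = length w2 \<and> word_lt r w1 w2))"
proof
  assume "(to_nat w1, to_nat w2) \<in> rp c B r"
  then obtain x1 x2 where x: "to_nat w1 = (to_nat :: nat list \<Rightarrow> nat) x1" "to_nat w2 = (to_nat :: nat list \<Rightarrow> nat) x2"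
    "x1 \<in> Wd c B \<and> x2 \<in> Wd c B \<and> (length x1 < length x2 \<or> (length x1 = length x2 \<and> word_lt r x1 x2))"
    unfolding rp_def by blast
  have "x1 = w1" "x2 = w2" using x(1,2) by (metis to_nat_split)+
  then show "w1 \<in> Wd c B \<and> w2 \<in> Wd c B \<and> (length w1 < length w2 \<or> (length w1 = length w2 \<and> word_lt r w1 w2))"
    using x(3) by simp
next
  assume "w1 \<in> Wd c B \<and> w2 \<in> Wd c B \<and> (length w1 < length w2 \<or> (length w1 = length w2 \<and> word_lt r w1 w2))"
  then show "(to_nat w1, to_nat w2) \<in> rp c B r" unfolding rp_def by blast
qed

lemma rp_sub: "rp c B r \<subseteq> Bp c B \<times> Bp c B"
  unfolding rp_def Bp_def by blast

lemma finite_Wd: "finite B \<Longrightarrow> finite (Wd c B)"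
  unfolding Wd_def using finite_lists_length_le[of B c] by (simp add: conj_commute)

lemma nil_Bp: "to_nat ([]::nat list) \<in> Bp c B"
  unfolding Bp_def Wd_def by (rule imageI) simp

lemma Bp_dec: "x \<in> Bp c B \<Longrightarrow> dec x \<in> Wd c B \<and> to_nat (dec x) = x"
  unfolding Bp_def by auto

lemma rp_order:
  assumes "finite B" "strict_linear_order_on B r"
  shows "finite (Bp c B) \<and> strict_linear_order_on (Bp c B) (rp c B r)"
proof -
  have tr: "trans r" and irr: "irrefl r" and tot: "total_on B r"
    using assms(2) by (auto simp: strict_linear_order_on_def)
  have f: "finite (Bp c B)" unfolding Bp_def using finite_Wd[OF assms(1)] by simp
  have t: "trans (rp c B r)"
  proof (rule transI)
    fix x y z assume xy: "(x, y) \<in> rp c B r" and yz: "(y, z) \<in> rp c B r"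
    obtain w1 w2 where 1: "x = to_nat w1" "y = to_nat w2" "w1 \<in> Wd c B" "w2 \<in> Wd c B"
      "length w1 < length w2 \<or> (length w1 = length w2 \<and> word_lt r w1 w2)"
      using xy unfolding rp_def by blast
    obtain w2' w3 where 2: "y = to_nat w2'" "z = to_nat w3" "w2' \<in> Wd c B" "w3 \<in> Wd c B"
      "length w2' < length w3 \<or> (length w2' = length w3 \<and> word_lt r w2' w3)"
      using yz unfolding rp_def by blast
    have e: "w2' = w2" using 1(2) 2(1) by (metis to_nat_split)
    have "length w1 < length w3 \<or> (length w1 = length w3 \<and> word_lt r w1 w3)"
    proof (cases "length w1 = length w2 \<and> length w2 = length w3")
      case True
      then have t12: "word_lt r w1 w2" "word_lt r w2 w3" using 1(5) 2(5) e by auto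
      have "word_lt r w1 w3" using word_lt_trans[OF tr t12] True by simp
      then show ?thesis using True by simp
    next
      case False
      then show ?thesis using 1(5) 2(5) e by auto
    qed
    then show "(x, z) \<in> rp c B r" unfolding 1(1) 2(2) rp_mem using 1(3) 2(4) by blast
  qed
  have i: "irrefl (rp c B r)"
    unfolding irrefl_def
  proof
    fix x show "(x, x) \<notin> rp c B r"
    proof
      assume "(x, x) \<in> rp c B r"
      then obtain w1 w2 where 1: "x = to_nat w1" "x = to_nat w2"
        "length w1 < length w2 \<or> (length w1 = length w2 \<and> word_lt r w1 w2)"
        unfolding rp_def by blast
      have "w1 = w2" using 1(1,2) by (metis to_nat_split)
      then show False using 1(3) word_lt_irrefl[OF irr] by simp
    qed
  qed
  have to: "total_on (Bp c B) (rp c B r)"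
    unfolding total_on_def
  proof (intro ballI impI)
    fix x y assume x: "x \<in> Bp c B" and y: "y \<in> Bp c B" and ne: "x \<noteq> y"
    obtain w1 where w1: "x = to_nat w1" "w1 \<in> Wd c B" using x unfolding Bp_def by blast
    obtain w2 where w2: "y = to_nat w2" "w2 \<in> Wd c B" using y unfolding Bp_def by blast
    have "w1 \<noteq> w2" using ne w1 w2 by blast
    then have "length w1 < length w2 \<or> length w2 < length w1 \<or>
        (length w1 = length w2 \<and> (word_lt r w1 w2 \<or> word_lt r w2 w1))"
      using word_lt_total[OF tot, of w1 w2] w1(2) w2(2) unfolding Wd_def by auto
    then show "(x, y) \<in> rp c B r \<or> (y, x) \<in> rp c B r"
      unfolding w1(1) w2(1) rp_mem using w1(2) w2(2) by auto
  qed
  show ?thesis using f t i to by (simp add: strict_linear_order_on_def)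
qed

fun blocks :: "nat list \<Rightarrow> 'x list \<Rightarrow> 'x list list" where
  "blocks [] v = []"
| "blocks (l#ls) v = take l v # blocks ls (drop l v)"

lemma blocks_props:
  "length v = sum_list ls \<Longrightarrow> concat (blocks ls v) = v \<and> map length (blocks ls v) = ls \<and>
     (\<forall>w\<in>set (blocks ls v). set w \<subseteq> set v)"
proof (induction ls arbitrary: v)
  case Nil then show ?case by simp
next
  case (Cons l ls)
  have "length (drop l v) = sum_list ls" using Cons.prems by simp
  then have ih: "concat (blocks ls (drop l v)) = drop l v \<and> map length (blocks ls (drop l v)) = ls \<and>
     (\<forall>w\<in>set (blocks ls (drop l v)). set w \<subseteq> set (drop l v))" by (rule Cons.IH)
  have "set (drop l v) \<subseteq> set v" by (rule set_drop_subset)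
  moreover have "set (take l v) \<subseteq> set v" by (rule set_take_subset)
  moreover have "length (take l v) = l" using Cons.prems by simp
  ultimately show ?case using ih by auto
qed

lemma word_lt_concat:
  assumes "word_lt r x y" "length x = length y" "length p1 = length p2"
  shows "word_lt r (p1 @ x @ s) (p2 @ y @ s)"
proof -
  obtain k where k: "k < length x" "(x!k, y!k) \<in> r" and kk: "\<And>j. k < j \<Longrightarrow> j < length x \<Longrightarrow> x!j = y!j"
    using assms(1) unfolding word_lt_def by blast
  let ?i = "length p1 + k"
  have a: "(p1 @ x @ s) ! ?i = x!k" using k(1) by (simp add: nth_append)
  have b: "(p2 @ y @ s) ! ?i = y!k" using k(1) assms(2,3) by (simp add: nth_append)
  have c: "\<forall>j. ?i < j \<and> j < length (p1 @ x @ s) \<longrightarrow> (p1 @ x @ s) ! j = (p2 @ y @ s) ! j"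
  proof (intro allI impI)
    fix j assume j: "?i < j \<and> j < length (p1 @ x @ s)"
    define d where "d = j - length p1"
    have jd: "j = length p1 + d" using j d_def by simp
    have j2: "j = length p2 + d" using jd assms(3) by simp
    have A1: "(p1 @ x @ s) ! j = (x @ s) ! d" unfolding jd by (rule nth_append_length_plus)
    have A2: "(p2 @ y @ s) ! j = (y @ s) ! d" unfolding j2 by (rule nth_append_length_plus)
    have kd: "k < d" using j jd by simp
    show "(p1 @ x @ s) ! j = (p2 @ y @ s) ! j"
    proof (cases "d < length x")
      case True
      then have "(x @ s) ! d = x ! d" "(y @ s) ! d = y ! d" using assms(2) by (simp_all add: nth_append)
      moreover have "x ! d = y ! d" using kk kd True by simp
      ultimately show ?thesis using A1 A2 by simp
    next
      case False
      then have "(x @ s) ! d = s ! (d - length x)" "(y @ s) ! d = s ! (d - length x)"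
        using assms(2) by (simp_all add: nth_append)
      then show ?thesis using A1 A2 by simp
    qed
  qed
  have "?i < length (p1 @ x @ s)" using k(1) by simp
  then show ?thesis unfolding word_lt_def using a b c k(2) by metis
qed

lemma Phi_append: "Phi (a @ b) = Phi a @ Phi b" unfolding Phi_def by simp

lemma map_len_dec:
  assumes "length b = length l" "cvalid l b"
  shows "map (\<lambda>x. length (dec x)) b = l"
  using assms unfolding cvalid_def by (intro nth_equalityI) auto

lemma Phi_mono:
  assumes tr: "trans r" and b1: "length b1 = length l" "set b1 \<subseteq> Bp c B" "cvalid l b1"
    and b2: "length b2 = length l" "set b2 \<subseteq> Bp c B" "cvalid l b2"
    and lt: "word_lt (rp c B r) b1 b2"
  shows "word_lt r (Phi b1) (Phi b2)"
proof -
  obtain i where i: "i < length b1" "(b1!i, b2!i) \<in> rp c B r"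
    and ii: "\<forall>j. i < j \<and> j < length b1 \<longrightarrow> b1!j = b2!j"
    using lt unfolding word_lt_def by blast
  have in1: "b1!i \<in> Bp c B" using b1(2) i(1) by auto
  have in2: "b2!i \<in> Bp c B" using b2(2) i(1) b1(1) b2(1) by auto
  let ?w1 = "dec (b1!i)" and ?w2 = "dec (b2!i)"
  have e1: "to_nat ?w1 = b1!i" using Bp_dec[OF in1] by blast
  have e2: "to_nat ?w2 = b2!i" using Bp_dec[OF in2] by blast
  have r: "?w1 \<in> Wd c B \<and> ?w2 \<in> Wd c B \<and> (length ?w1 < length ?w2 \<or> (length ?w1 = length ?w2 \<and> word_lt r ?w1 ?w2))"
    using i(2) rp_mem[of ?w1 ?w2 c B r] e1 e2 by simp
  have len: "length ?w1 = length ?w2" using b1(3) b2(3) i(1) b1(1) unfolding cvalid_def by simp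
  have wl: "word_lt r ?w1 ?w2" using r len by simp
  have d: "drop (Suc i) b1 = drop (Suc i) b2"
    by (rule nth_equalityI) (use b1(1) b2(1) ii in auto)
  have s1: "b1 = take i b1 @ [b1!i] @ drop (Suc i) b1" using id_take_nth_drop[OF i(1)] by simp
  have s2: "b2 = take i b2 @ [b2!i] @ drop (Suc i) b2" using id_take_nth_drop[of i b2] i(1) b1(1) b2(1) by simp
  have m1: "map (\<lambda>x. length (dec x)) b1 = l" by (rule map_len_dec[OF b1(1,3)])
  have m2: "map (\<lambda>x. length (dec x)) b2 = l" by (rule map_len_dec[OF b2(1,3)])
  have lp: "length (Phi (take i b1)) = length (Phi (take i b2))"
  proof -
    have "length (Phi (take i b1)) = sum_list (map (\<lambda>x. length (dec x)) (take i b1))"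
      unfolding Phi_def by (simp add: length_concat o_def)
    also have "\<dots> = sum_list (take i l)" using m1 by (metis take_map)
    also have "\<dots> = sum_list (map (\<lambda>x. length (dec x)) (take i b2))" using m2 by (metis take_map)
    also have "\<dots> = length (Phi (take i b2))"
      unfolding Phi_def by (simp add: length_concat o_def)
    finally show ?thesis .
  qed
  have "Phi b1 = Phi (take i b1) @ ?w1 @ Phi (drop (Suc i) b1)"
    by (subst s1) (simp add: Phi_append Phi_def)
  moreover have "Phi b2 = Phi (take i b2) @ ?w2 @ Phi (drop (Suc i) b1)"
    by (subst s2) (simp add: Phi_append Phi_def d)
  ultimately show ?thesis using word_lt_concat[OF wl len lp] by simp
qed

lemma enum_pad:
  assumes fB: "finite B" and slo: "strict_linear_order_on B r" and lc: "\<forall>x\<in>set l. x \<le> c"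
  shows "map Phi (filter (cvalid l) (enum_words (Bp c B) (rp c B r) (length l))) = enum_words B r (sum_list l)"
proof -
  let ?E' = "enum_words (Bp c B) (rp c B r) (length l)"
  let ?xs = "map Phi (filter (cvalid l) ?E')"
  have o': "finite (Bp c B) \<and> strict_linear_order_on (Bp c B) (rp c B r)" by (rule rp_order[OF fB slo])
  have E': "set ?E' = {b. length b = length l \<and> set b \<subseteq> Bp c B} \<and> sorted_wrt (word_lt (rp c B r)) ?E'"
    using enum_words_props(1) o' by blast
  have tr: "trans r" using slo by (simp add: strict_linear_order_on_def)
  have setxs: "set ?xs = {b. length b = sum_list l \<and> set b \<subseteq> B}"
  proof
    show "set ?xs \<subseteq> {b. length b = sum_list l \<and> set b \<subseteq> B}"
    proof
      fix v assume "v \<in> set ?xs"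
      then obtain b where b: "b \<in> set ?E'" "cvalid l b" "v = Phi b" by auto
      have bl: "length b = length l" "set b \<subseteq> Bp c B" using b(1) E' by auto
      have "length v = sum_list (map (\<lambda>x. length (dec x)) b)"
        unfolding b(3) Phi_def by (simp add: length_concat o_def)
      also have "\<dots> = sum_list l" using map_len_dec[OF bl(1) b(2)] by simp
      finally have "length v = sum_list l" .
      moreover have "set v \<subseteq> B"
      proof
        fix y assume "y \<in> set v"
        then obtain x where x: "x \<in> set b" "y \<in> set (dec x)" unfolding b(3) Phi_def by auto
        have "dec x \<in> Wd c B" using Bp_dec x(1) bl(2) by blast
        then show "y \<in> B" using x(2) unfolding Wd_def by blast
      qed
      ultimately show "v \<in> {b. length b = sum_list l \<and> set b \<subseteq> B}" by simp
    qed
  next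
    show "{b. length b = sum_list l \<and> set b \<subseteq> B} \<subseteq> set ?xs"
    proof
      fix v assume "v \<in> {b. length b = sum_list l \<and> set b \<subseteq> B}"
      then have v: "length v = sum_list l" "set v \<subseteq> B" by auto
      let ?bl = "blocks l v"
      have bp: "concat ?bl = v" "map length ?bl = l" "\<forall>w\<in>set ?bl. set w \<subseteq> set v"
        using blocks_props[OF v(1)] by auto
      let ?b = "map (to_nat :: nat list \<Rightarrow> nat) ?bl"
      have lenb: "length ?b = length l" using bp(2) by (metis length_map)
      have wd: "\<forall>w\<in>set ?bl. w \<in> Wd c B"
      proof
        fix w assume w: "w \<in> set ?bl"
        have "length w \<in> set l" using w bp(2) by (metis image_eqI set_map)
        then have "length w \<le> c" using lc by blast
        moreover have "set w \<subseteq> B" using bp(3) w v(2) by blast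
        ultimately show "w \<in> Wd c B" unfolding Wd_def by blast
      qed
      have setb: "set ?b \<subseteq> Bp c B" unfolding Bp_def using wd by auto
      have dd: "map dec ?b = ?bl" by (simp add: o_def)
      have cv: "cvalid l ?b" unfolding cvalid_def
      proof (intro allI impI)
        fix i assume "i < length l"
        then have "i < length ?bl" using bp(2) by (metis length_map)
        then have "length (dec (?b!i)) = length (?bl ! i)" by simp
        also have "\<dots> = l ! i" using bp(2) \<open>i < length ?bl\<close> by (metis nth_map)
        finally show "length (dec (?b!i)) = l!i" .
      qed
      have "?b \<in> set ?E'" using E' lenb setb by blast
      moreover have "Phi ?b = v" unfolding Phi_def dd bp(1) ..
      ultimately show "v \<in> set ?xs" using cv by force
    qed
  qed
  have sorted: "sorted_wrt (word_lt r) ?xs"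
    unfolding sorted_wrt_map
  proof (rule sorted_wrt_mono_rel[of _ "word_lt (rp c B r)"])
    fix x y assume x: "x \<in> set (filter (cvalid l) ?E')" and y: "y \<in> set (filter (cvalid l) ?E')"
      and xy: "word_lt (rp c B r) x y"
    have xx: "length x = length l" "set x \<subseteq> Bp c B" "cvalid l x" using x E' by auto
    have yy: "length y = length l" "set y \<subseteq> Bp c B" "cvalid l y" using y E' by auto
    show "word_lt r (Phi x) (Phi y)" by (rule Phi_mono[OF tr xx yy xy])
  next
    show "sorted_wrt (word_lt (rp c B r)) (filter (cvalid l) ?E')"
      using E' sorted_wrt_filter by blast
  qed
  show ?thesis using enum_words_props(2)[OF fB slo setxs sorted] by simp
qed

lemma maplex_filter:
  assumes G: "\<forall>b\<in>set E'. G b = (if P b then H (Phi b) else Some [])"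
    and E: "map Phi (filter P E') = E"
  shows "(if \<forall>b\<in>set E'. G b \<noteq> None then Some (concat (map (\<lambda>b. the (G b)) E')) else None) =
         (if \<forall>b\<in>set E. H b \<noteq> None then Some (concat (map (\<lambda>b. the (H b)) E)) else None)"
proof -
  have A: "(\<forall>b\<in>set E'. G b \<noteq> None) \<longleftrightarrow> (\<forall>b\<in>set E. H b \<noteq> None)"
  proof -
    have "set E = Phi ` {b \<in> set E'. P b}" using E by (metis set_filter set_map)
    then show ?thesis using G by auto
  qed
  have B: "concat (map (\<lambda>b. the (G b)) E') = concat (map (\<lambda>b. the (H b)) E)"
  proof -
    have "concat (map (\<lambda>b. the (G b)) E') = concat (map (\<lambda>b. the (G b)) (filter P E'))"
      using G by (induction E') auto
    also have "\<dots> = concat (map (\<lambda>b. the (H (Phi b))) (filter P E'))"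
      using G by (intro arg_cong[where f=concat] map_cong) auto
    also have "\<dots> = concat (map (\<lambda>b. the (H b)) (map Phi (filter P E')))" by (simp add: o_def)
    finally show ?thesis using E by simp
  qed
  show ?thesis using A B by simp
qed

definition rows :: "'x list \<Rightarrow> nat list list \<Rightarrow> ('x \<times> nat list) list" where
  "rows u cols = map (\<lambda>i. (u!i, map (\<lambda>c. c!i) cols)) [0..<length u]"

lemma length_rows[simp]: "length (rows u cols) = length u"
  unfolding rows_def by simp

lemma nth_rows[simp]: "i < length u \<Longrightarrow> rows u cols ! i = (u!i, map (\<lambda>c. c!i) cols)"
  unfolding rows_def by simp

lemma map_fst_rows[simp]: "map fst (rows u cols) = u"
  by (rule nth_equalityI) auto

lemma rows_nil: "rows u [] = map (\<lambda>a. (a, [])) u"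
  by (rule nth_equalityI) auto

lemma rows_snoc:
  assumes "length b = length u"
  shows "map (\<lambda>((a,bs),x). (a, bs @ [x])) (zip (rows u cols) b) = rows u (cols @ [b])"
  by (rule nth_equalityI) (use assms in auto)

lemma rows_Nil_word[simp]: "rows [] cols = []"
  unfolding rows_def by simp

lemma rows_Cons:
  assumes "\<forall>c\<in>set cols. c \<noteq> []"
  shows "rows (a#u) cols = (a, map hd cols) # rows u (map tl cols)"
proof (rule nth_equalityI)
  show "length (rows (a # u) cols) = length ((a, map hd cols) # rows u (map tl cols))" by simp
next
  fix i assume i: "i < length (rows (a # u) cols)"
  show "rows (a # u) cols ! i = ((a, map hd cols) # rows u (map tl cols)) ! i"
  proof (cases i)
    case 0
    then show ?thesis using assms by (simp add: hd_conv_nth)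
  next
    case (Suc j)
    then have "j < length u" using i by simp
    moreover have "map (\<lambda>c. c ! Suc j) cols = map (\<lambda>c. c ! j) (map tl cols)"
      unfolding map_map o_def
    proof (rule map_cong[OF refl])
      fix c assume "c \<in> set cols"
      then have "c \<noteq> []" using assms by blast
      then show "c ! Suc j = tl c ! j" by (cases c) auto
    qed
    ultimately show ?thesis using Suc by simp
  qed
qed

lemma rows_append:
  assumes "\<forall>d\<in>set ds. length d = length x" "length ds = length es"
  shows "rows (x @ v) (map2 (@) ds es) = rows x ds @ rows v es"
proof (rule nth_equalityI)
  show "length (rows (x @ v) (map2 (@) ds es)) = length (rows x ds @ rows v es)" by simp
next
  fix i assume i: "i < length (rows (x @ v) (map2 (@) ds es))"
  show "rows (x @ v) (map2 (@) ds es) ! i = (rows x ds @ rows v es) ! i"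
  proof (cases "i < length x")
    case True
    have "map (\<lambda>c. c ! i) (map2 (@) ds es) = map (\<lambda>c. c ! i) ds"
      by (rule nth_equalityI) (use assms True in \<open>auto simp: nth_append\<close>)
    then show ?thesis using True i by (simp add: nth_append)
  next
    case False
    have "map (\<lambda>c. c ! i) (map2 (@) ds es) = map (\<lambda>c. c ! (i - length x)) es"
      by (rule nth_equalityI) (use assms False in \<open>auto simp: nth_append\<close>)
    then show ?thesis using False i by (simp add: nth_append)
  qed
qed


definition vp :: "nat \<Rightarrow> ('x list \<times> nat list) \<Rightarrow> bool" where
  "vp k ob \<longleftrightarrow> (\<forall>c<k. length (dec (snd ob ! c)) = length (fst ob))"

definition seg :: "nat \<Rightarrow> ('x list \<times> nat list) \<Rightarrow> ('x \<times> nat list) list" where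
  "seg k ob = rows (fst ob) (map (\<lambda>c. dec (snd ob ! c)) [0..<k])"

lemma Phi_Cons: "Phi (x # xs) = dec x @ Phi xs" unfolding Phi_def by simp

lemma cvalid_Cons:
  "cvalid (l0 # ls) (x # col) \<longleftrightarrow> length (dec x) = l0 \<and> cvalid ls col"
proof -
  have "cvalid (l0 # ls) (x # col) \<longleftrightarrow>
     (\<forall>i<Suc (length ls). length (dec ((x # col) ! i)) = (l0 # ls) ! i)"
    unfolding cvalid_def by simp
  also have "\<dots> \<longleftrightarrow> length (dec x) = l0 \<and> (\<forall>i<length ls. length (dec (col ! i)) = ls ! i)"
    by (simp add: All_less_Suc2)
  finally show ?thesis unfolding cvalid_def by simp
qed

lemma decode_rows:
  assumes "length Os = length u" "length cols = k"
    "\<forall>col\<in>set cols. length col = length u \<and> cvalid (map length Os) col"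
  shows "concat (map (seg k) (zip Os (map snd (rows u cols)))) = rows (concat Os) (map Phi cols)"
  using assms
proof (induction Os arbitrary: u cols)
  case Nil
  then show ?case by simp
next
  case (Cons ob Os)
  obtain a u' where u: "u = a # u'" using Cons.prems(1) by (cases u) auto
  have ne: "\<forall>c\<in>set cols. c \<noteq> []" using Cons.prems(3) u by auto
  have rc: "rows u cols = (a, map hd cols) # rows u' (map tl cols)" unfolding u by (rule rows_Cons[OF ne])
  have hdv: "\<forall>col\<in>set cols. length (dec (hd col)) = length ob \<and> cvalid (map length Os) (tl col)"
  proof
    fix col assume col: "col \<in> set cols"
    then have "col \<noteq> []" using ne by blast
    then obtain x col' where "col = x # col'" by (meson neq_Nil_conv)
    then show "length (dec (hd col)) = length ob \<and> cvalid (map length Os) (tl col)"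
      using Cons.prems(3) col cvalid_Cons by auto
  qed
  have ih: "concat (map (seg k) (zip Os (map snd (rows u' (map tl cols))))) = rows (concat Os) (map Phi (map tl cols))"
  proof (rule Cons.IH)
    show "length Os = length u'" using Cons.prems(1) u by simp
    show "length (map tl cols) = k" using Cons.prems(2) by simp
    show "\<forall>col\<in>set (map tl cols). length col = length u' \<and> cvalid (map length Os) col"
      using Cons.prems(3) hdv u by auto
  qed
  have s: "seg k (ob, map hd cols) = rows ob (map (\<lambda>col. dec (hd col)) cols)"
  proof -
    have "map (\<lambda>c. dec (map hd cols ! c)) [0..<k] = map (\<lambda>col. dec (hd col)) cols"
      by (rule nth_equalityI) (use Cons.prems(2) in auto)
    then show ?thesis unfolding seg_def by simp
  qed
  have mp: "map Phi cols = map2 (@) (map (\<lambda>col. dec (hd col)) cols) (map (\<lambda>col. Phi (tl col)) cols)"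
    unfolding map2_map_map
  proof (rule map_cong[OF refl])
    fix col assume "col \<in> set cols"
    then have "col \<noteq> []" using ne by blast
    then obtain x col' where "col = x # col'" by (meson neq_Nil_conv)
    then show "Phi col = dec (hd col) @ Phi (tl col)" by (simp add: Phi_Cons)
  qed
  have ra: "rows (ob @ concat Os) (map Phi cols) =
      rows ob (map (\<lambda>col. dec (hd col)) cols) @ rows (concat Os) (map (\<lambda>col. Phi (tl col)) cols)"
    unfolding mp by (rule rows_append) (use hdv in auto)
  show ?case unfolding rc using s ih ra by (simp add: o_def)
qed

lemma valid_rows:
  assumes "length Os = length u" "length cols = k" "\<forall>col\<in>set cols. length col = length u"
  shows "list_all (vp k) (zip Os (map snd (rows u cols))) \<longleftrightarrow> (\<forall>col\<in>set cols. cvalid (map length Os) col)"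
proof -
  have "list_all (vp k) (zip Os (map snd (rows u cols))) \<longleftrightarrow>
      (\<forall>i<length u. \<forall>c<k. length (dec (cols ! c ! i)) = length (Os ! i))"
    using assms(1,2) by (auto simp: list_all_length vp_def)
  also have "\<dots> \<longleftrightarrow> (\<forall>col\<in>set cols. cvalid (map length Os) col)"
  proof
    assume H: "\<forall>i<length u. \<forall>c<k. length (dec (cols ! c ! i)) = length (Os ! i)"
    show "\<forall>col\<in>set cols. cvalid (map length Os) col"
    proof
      fix col assume "col \<in> set cols"
      then obtain c where c: "c < k" "col = cols ! c" using assms(2) by (metis in_set_conv_nth)
      show "cvalid (map length Os) col" unfolding cvalid_def using H c assms(1) by simp
    qed
  next
    assume H: "\<forall>col\<in>set cols. cvalid (map length Os) col"
    show "\<forall>i<length u. \<forall>c<k. length (dec (cols ! c ! i)) = length (Os ! i)"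
    proof (intro allI impI)
      fix i c assume i: "i < length u" and c: "c < k"
      have "cols ! c \<in> set cols" using c assms(2) by simp
      then have "cvalid (map length Os) (cols ! c)" using H by blast
      then show "length (dec (cols ! c ! i)) = length (Os ! i)" unfolding cvalid_def using i assms(1) by simp
    qed
  qed
  finally show ?thesis .
qed

locale comp = trd Q \<delta> I F \<mu> for Q \<delta> I F and \<mu> :: "nat \<times> 'a \<times> nat \<Rightarrow> 'b list" +
  fixes Ls :: "(nat set \<times> nat rel) list" and h :: "('b \<times> nat list) list \<Rightarrow> 'c list option"
  assumes Ls_ok: "\<forall>(B,r)\<in>set Ls. finite B \<and> strict_linear_order_on B r"
begin

definition T :: "nat set \<times> nat rel \<Rightarrow> nat set \<times> nat rel" where
  "T x = (Bp cmax (fst x), rp cmax (fst x) (snd x))"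

definition A' :: "('a \<times> nat list) set" where "A' = tuple_alphabet (map T Ls)"

definition OU :: "('a \<times> nat list) list \<Rightarrow> 'b list list" where
  "OU U = outs (rho0 (map fst U)) (map fst U)"

definition valid :: "('a \<times> nat list) list \<Rightarrow> bool" where
  "valid U \<longleftrightarrow> list_all (vp (length Ls)) (zip (OU U) (map snd U))"

definition DU :: "('a \<times> nat list) list \<Rightarrow> ('b \<times> nat list) list" where
  "DU U = concat (map (seg (length Ls)) (zip (OU U) (map snd U)))"

definition h' :: "('a \<times> nat list) list \<Rightarrow> 'c list option" where
  "h' U = (if U \<in> lists A' \<and> I \<inter> co (map fst U) \<noteq> {} then (if valid U then h (DU U) else Some []) else None)"

lemma T_pair: "T (B, r) = (Bp cmax B, rp cmax B r)" unfolding T_def by simp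

lemma lexmap_T_Cons:
  "lexmap (map T ((B,r) # rest)) h' W =
     maplex (Bp cmax B) (rp cmax B r) (\<lambda>w. lexmap (map T rest) h' (map (\<lambda>((a, bs), b). (a, bs @ [b])) w)) W"
  by (simp add: T_pair)

lemma enumBp:
  assumes "(B, r) \<in> set Ls"
  shows "set (enum_words (Bp cmax B) (rp cmax B r) n) = {b. length b = n \<and> set b \<subseteq> Bp cmax B}"
proof -
  have "finite B" "strict_linear_order_on B r" using Ls_ok assms by auto
  then have "finite (Bp cmax B) \<and> strict_linear_order_on (Bp cmax B) (rp cmax B r)" by (rule rp_order)
  then show ?thesis using enum_words_props(1) by blast
qed

lemma none_case:
  assumes ne: "I \<inter> co u = {}"
  shows "set rest \<subseteq> set Ls \<Longrightarrow> lexmap (map T rest) h' (rows u cols) = None"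
proof (induction rest arbitrary: cols)
  case Nil
  then show ?case using ne by (simp add: h'_def)
next
  case (Cons x rest)
  obtain B r where x: "x = (B, r)" by (cases x)
  have inL: "(B, r) \<in> set Ls" using Cons.prems x by simp
  let ?bz = "replicate (length u) (to_nat ([]::nat list))"
  have bz: "?bz \<in> set (enum_words (Bp cmax B) (rp cmax B r) (length u))"
    unfolding enumBp[OF inL] using nil_Bp by auto
  have "lexmap (map T rest) h' (map (\<lambda>((a, bs), b). (a, bs @ [b])) (zip (rows u cols) ?bz)) = None"
    unfolding rows_snoc[of ?bz u cols, simplified] using Cons.IH Cons.prems by simp
  then show ?case unfolding x lexmap_T_Cons maplex_def Let_def length_rows using bz by auto
qed

lemma main_case:
  assumes ne: "I \<inter> co u \<noteq> {}"
  shows "Ls = pre @ rest \<Longrightarrow> length cols = length pre \<Longrightarrow>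
    (\<forall>c<length pre. length (cols!c) = length u \<and> set (cols!c) \<subseteq> Bp cmax (fst (pre!c))) \<Longrightarrow>
    lexmap (map T rest) h' (rows u cols) =
      (if \<forall>col\<in>set cols. cvalid (map length (outs (rho0 u) u)) col
       then lexmap rest h (rows (concat (outs (rho0 u) u)) (map Phi cols)) else Some [])"
proof (induction rest arbitrary: pre cols)
  case Nil
  let ?O = "outs (rho0 u) u"
  let ?U = "rows u cols"
  have pre: "pre = Ls" using Nil.prems(1) by simp
  have mf: "map fst ?U = u" by simp
  have OU: "OU ?U = ?O" unfolding OU_def by simp
  have lenO: "length ?O = length u" by simp
  have lc: "length cols = length Ls" using Nil.prems(2) pre by simp
  have colen: "\<forall>col\<in>set cols. length col = length u"
    using Nil.prems(3) lc pre by (metis in_set_conv_nth)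
  have inA: "?U \<in> lists A'"
  proof (rule in_listsI, rule ballI)
    fix x assume "x \<in> set ?U"
    then obtain i where i: "i < length u" "x = ?U ! i" by (metis in_set_conv_nth length_rows)
    have x: "x = (u!i, map (\<lambda>c. c!i) cols)" using i by simp
    have "\<forall>j<length Ls. cols ! j ! i \<in> fst (map T Ls ! j)"
    proof (intro allI impI)
      fix j assume j: "j < length Ls"
      have "length (cols!j) = length u \<and> set (cols!j) \<subseteq> Bp cmax (fst (pre!j))"
        using Nil.prems(3) j pre by simp
      then have "cols ! j ! i \<in> Bp cmax (fst (Ls!j))" using i(1) pre by auto
      then show "cols ! j ! i \<in> fst (map T Ls ! j)" using j by (simp add: T_def)
    qed
    then show "x \<in> A'" unfolding A'_def tuple_alphabet_def x using lc by simp
  qed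
  have val: "valid ?U \<longleftrightarrow> (\<forall>col\<in>set cols. cvalid (map length ?O) col)"
    unfolding valid_def OU by (rule valid_rows[OF lenO lc colen])
  show ?case
  proof (cases "\<forall>col\<in>set cols. cvalid (map length ?O) col")
    case True
    have "DU ?U = rows (concat ?O) (map Phi cols)"
      unfolding DU_def OU by (rule decode_rows[OF lenO lc]) (use colen True in blast)
    then show ?thesis using True val inA ne by (simp add: h'_def)
  next
    case False
    have nv: "\<not> valid ?U" using False val by simp
    have "h' ?U = Some []" using nv inA ne by (simp add: h'_def)
    then show ?thesis unfolding if_not_P[OF False] by simp
  qed
next
  case (Cons x rest2)
  obtain B r where x: "x = (B, r)" by (cases x)
  let ?O = "outs (rho0 u) u"
  let ?l = "map length ?O"
  let ?v = "concat ?O"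
  let ?E' = "enum_words (Bp cmax B) (rp cmax B r) (length u)"
  let ?E = "enum_words B r (length ?v)"
  have inL: "(B, r) \<in> set Ls" using Cons.prems(1) x by simp
  have fB: "finite B" and slo: "strict_linear_order_on B r" using Ls_ok inL by auto
  have E': "\<And>b. b \<in> set ?E' \<Longrightarrow> length b = length u \<and> set b \<subseteq> Bp cmax B"
    using enumBp[OF inL] by blast
  let ?G = "\<lambda>b. lexmap (map T rest2) h' (map (\<lambda>((a, bs), b). (a, bs @ [b])) (zip (rows u cols) b))"
  let ?H = "\<lambda>b. lexmap rest2 h (map (\<lambda>((a, bs), b). (a, bs @ [b])) (zip (rows ?v (map Phi cols)) b))"
  have G: "\<And>b. b \<in> set ?E' \<Longrightarrow> ?G b = (if \<forall>col\<in>set (cols @ [b]). cvalid ?l col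
       then lexmap rest2 h (rows ?v (map Phi (cols @ [b]))) else Some [])"
  proof -
    fix b assume b: "b \<in> set ?E'"
    have bb: "length b = length u" "set b \<subseteq> Bp cmax B" using E'[OF b] by auto
    have "?G b = lexmap (map T rest2) h' (rows u (cols @ [b]))" using rows_snoc[OF bb(1)] by simp
    also have "\<dots> = (if \<forall>col\<in>set (cols @ [b]). cvalid ?l col
       then lexmap rest2 h (rows ?v (map Phi (cols @ [b]))) else Some [])"
    proof (rule Cons.IH[of "pre @ [(B, r)]"])
      show "Ls = (pre @ [(B, r)]) @ rest2" using Cons.prems(1) x by simp
      show "length (cols @ [b]) = length (pre @ [(B, r)])" using Cons.prems(2) by simp
      show "\<forall>c<length (pre @ [(B, r)]). length ((cols @ [b]) ! c) = length u \<and>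
            set ((cols @ [b]) ! c) \<subseteq> Bp cmax (fst ((pre @ [(B, r)]) ! c))"
      proof (intro allI impI)
        fix c assume c: "c < length (pre @ [(B, r)])"
        show "length ((cols @ [b]) ! c) = length u \<and> set ((cols @ [b]) ! c) \<subseteq> Bp cmax (fst ((pre @ [(B, r)]) ! c))"
        proof (cases "c < length pre")
          case True
          then show ?thesis using Cons.prems(2,3) by (simp add: nth_append)
        next
          case False
          then have "c = length pre" using c by simp
          then show ?thesis using Cons.prems(2) bb by (simp add: nth_append)
        qed
      qed
    qed
    finally show "?G b = (if \<forall>col\<in>set (cols @ [b]). cvalid ?l col
       then lexmap rest2 h (rows ?v (map Phi (cols @ [b]))) else Some [])" .
  qed
  have LHS: "lexmap (map T (x # rest2)) h' (rows u cols) =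
     (if \<forall>b\<in>set ?E'. ?G b \<noteq> None then Some (concat (map (\<lambda>b. the (?G b)) ?E')) else None)"
    unfolding x lexmap_T_Cons maplex_def Let_def length_rows ..
  show ?case
  proof (cases "\<forall>col\<in>set cols. cvalid ?l col")
    case True
    have G2: "\<forall>b\<in>set ?E'. ?G b = (if cvalid ?l b then ?H (Phi b) else Some [])"
    proof
      fix b assume b: "b \<in> set ?E'"
      have bb: "length b = length u" "set b \<subseteq> Bp cmax B" using E'[OF b] by auto
      show "?G b = (if cvalid ?l b then ?H (Phi b) else Some [])"
      proof (cases "cvalid ?l b")
        case cv: True
        have "length (Phi b) = sum_list (map (\<lambda>x. length (dec x)) b)"
          unfolding Phi_def by (simp add: length_concat o_def)
        also have "\<dots> = sum_list ?l" using map_len_dec[of b ?l] bb(1) cv by simp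
        also have "\<dots> = length ?v" by (simp add: length_concat)
        finally have lp: "length (Phi b) = length ?v" .
        have "?H (Phi b) = lexmap rest2 h (rows ?v (map Phi cols @ [Phi b]))"
          using rows_snoc[OF lp] by simp
        then show ?thesis using G[OF b] True cv by simp
      next
        case False
        then show ?thesis using G[OF b] by simp
      qed
    qed
    have lb: "\<forall>y\<in>set ?l. y \<le> cmax" using outs_bound[OF rho0(2)[OF ne]] by auto
    have EE: "map Phi (filter (cvalid ?l) ?E') = ?E"
      using enum_pad[OF fB slo lb] by (simp add: length_concat)
    have RHS: "lexmap (x # rest2) h (rows ?v (map Phi cols)) =
      (if \<forall>b\<in>set ?E. ?H b \<noteq> None then Some (concat (map (\<lambda>b. the (?H b)) ?E)) else None)"
      unfolding x lexmap.simps maplex_def Let_def length_rows ..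
    show ?thesis unfolding LHS RHS using maplex_filter[OF G2 EE] True by simp
  next
    case False
    have G3: "\<forall>b\<in>set ?E'. ?G b = (if (\<lambda>_. False) b then ?H (Phi b) else Some [])"
      using G False by simp
    have nil: "map Phi (filter (\<lambda>_. False) ?E') = []" by simp
    have M: "(if \<forall>b\<in>set ?E'. ?G b \<noteq> None then Some (concat (map (\<lambda>b. the (?G b)) ?E')) else None) = Some []"
      using maplex_filter[OF G3 nil] by (simp only: list.set(1) ball_empty if_True list.map(1) concat.simps(1))
    show ?thesis unfolding LHS M if_not_P[OF False] ..
  qed
qed

end

context comp begin

definition L0 :: "('a \<times> nat list) list set" where
  "L0 = {U. U \<in> lists A' \<and> I \<inter> co (map fst U) \<noteq> {} \<and> \<not> valid U}"

definition Lp :: "('b \<times> nat list) list set \<Rightarrow> ('a \<times> nat list) list set" where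
  "Lp L = {U. U \<in> lists A' \<and> I \<inter> co (map fst U) \<noteq> {} \<and> valid U \<and> DU U \<in> L}"

lemma acc0:
  "acc {(fl, x, fl'). fl' = (fl \<or> \<not> vp (length Ls) x)} {True} fl xs \<longleftrightarrow> fl \<or> \<not> list_all (vp (length Ls)) xs"
  by (induction xs arbitrary: fl) auto

lemma L0_regular: "regular_on A' L0"
proof -
  let ?Da = "{(fl, x, fl'). fl' = (fl \<or> \<not> vp (length Ls) x)} :: (bool \<times> ('b list \<times> nat list) \<times> bool) set"
  have r: "regular_on A' {U. U \<in> lists A' \<and> I \<inter> co (map fst U) \<noteq> {} \<and>
     (\<exists>s\<in>{False}. acc ?Da {True} s (zip (outs (rho0 (map fst U)) (map fst U)) (map snd U)))}"
    by (rule big_regular) auto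
  have "{U. U \<in> lists A' \<and> I \<inter> co (map fst U) \<noteq> {} \<and>
     (\<exists>s\<in>{False}. acc ?Da {True} s (zip (outs (rho0 (map fst U)) (map fst U)) (map snd U)))} = L0"
    unfolding L0_def valid_def OU_def acc0 by auto
  then show ?thesis using r by simp
qed

lemma Lp_regular:
  assumes "regular_on (tuple_alphabet Ls) L"
  shows "regular_on A' (Lp L)"
proof -
  obtain Qp :: "nat set" and \<delta>p Ip Fp where p: "finite Qp" "\<delta>p \<subseteq> Qp \<times> tuple_alphabet Ls \<times> Qp" "Ip \<subseteq> Qp" "Fp \<subseteq> Qp"
    and L: "L = {w. \<exists>q\<in>Ip. acc \<delta>p Fp q w}"
    using regular_acc[OF assms] by blast
  let ?Da = "{(s, x, s'). s \<in> Qp \<and> s' \<in> Qp \<and> vp (length Ls) x \<and> acc \<delta>p {s'} s (seg (length Ls) x)}"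
  have accp: "\<And>s xs. s \<in> Qp \<Longrightarrow> acc ?Da Fp s xs \<longleftrightarrow>
      list_all (vp (length Ls)) xs \<and> acc \<delta>p Fp s (concat (map (seg (length Ls)) xs))"
  proof -
    fix s xs show "s \<in> Qp \<Longrightarrow> acc ?Da Fp s xs \<longleftrightarrow>
      list_all (vp (length Ls)) xs \<and> acc \<delta>p Fp s (concat (map (seg (length Ls)) xs))"
    proof (induction xs arbitrary: s)
      case Nil then show ?case by simp
    next
      case (Cons x xs)
      show ?case
      proof
        assume "acc ?Da Fp s (x # xs)"
        then obtain s' where s': "(s, x, s') \<in> ?Da" "acc ?Da Fp s' xs" by auto
        have s'Q: "s' \<in> Qp" using s'(1) by blast
        have ih: "list_all (vp (length Ls)) xs \<and> acc \<delta>p Fp s' (concat (map (seg (length Ls)) xs))"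
          using Cons.IH[OF s'Q] s'(2) by simp
        have "vp (length Ls) x" "acc \<delta>p {s'} s (seg (length Ls) x)" using s'(1) by auto
        then show "list_all (vp (length Ls)) (x # xs) \<and> acc \<delta>p Fp s (concat (map (seg (length Ls)) (x # xs)))"
          using ih acc_append by fastforce
      next
        assume H: "list_all (vp (length Ls)) (x # xs) \<and> acc \<delta>p Fp s (concat (map (seg (length Ls)) (x # xs)))"
        then obtain s' where s': "acc \<delta>p {s'} s (seg (length Ls) x)" "acc \<delta>p Fp s' (concat (map (seg (length Ls)) xs))"
          using acc_append by (metis concat.simps(2) list.simps(9))
        have s'Q: "s' \<in> Qp" by (rule acc_in[OF p(2) Cons.prems s'(1)])
        have "(s, x, s') \<in> ?Da" using Cons.prems s'Q H s'(1) by simp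
        moreover have "acc ?Da Fp s' xs" using Cons.IH[OF s'Q] H s'(2) by simp
        ultimately show "acc ?Da Fp s (x # xs)" by auto
      qed
    qed
  qed
  have r: "regular_on A' {U. U \<in> lists A' \<and> I \<inter> co (map fst U) \<noteq> {} \<and>
     (\<exists>s\<in>Ip. acc ?Da Fp s (zip (outs (rho0 (map fst U)) (map fst U)) (map snd U)))}"
    by (rule big_regular) (use p in auto)
  have "{U. U \<in> lists A' \<and> I \<inter> co (map fst U) \<noteq> {} \<and>
     (\<exists>s\<in>Ip. acc ?Da Fp s (zip (outs (rho0 (map fst U)) (map fst U)) (map snd U)))} = Lp L"
  proof (rule set_eqI)
    fix U
    have "(\<exists>s\<in>Ip. acc ?Da Fp s (zip (OU U) (map snd U))) \<longleftrightarrow> valid U \<and> DU U \<in> L"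
      unfolding valid_def DU_def L using accp p(3) by blast
    then show "U \<in> {U. U \<in> lists A' \<and> I \<inter> co (map fst U) \<noteq> {} \<and>
     (\<exists>s\<in>Ip. acc ?Da Fp s (zip (outs (rho0 (map fst U)) (map fst U)) (map snd U)))} \<longleftrightarrow> U \<in> Lp L"
      unfolding Lp_def OU_def by simp
  qed
  then show ?thesis using r by simp
qed

lemma simple_h':
  assumes "simple_on (tuple_alphabet Ls) h"
  shows "simple_on A' h'"
proof -
  obtain P :: "(('b \<times> nat list) list set \<times> 'c list) list" where
    P1: "\<forall>(L, w) \<in> set P. regular_on (tuple_alphabet Ls) L \<and> length w \<le> 1" and
    P2: "\<forall>i < length P. \<forall>j < length P. i \<noteq> j \<longrightarrow> fst (P ! i) \<inter> fst (P ! j) = {}" and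
    P3: "\<forall>v. (h v = None \<longleftrightarrow> (\<forall>(L, w) \<in> set P. v \<notin> L)) \<and> (\<forall>(L, w) \<in> set P. v \<in> L \<longrightarrow> h v = Some w)"
    using assms unfolding simple_on_def by blast
  define P' where "P' = (L0, []) # map (\<lambda>(L, w). (Lp L, w)) P"
  have memP': "\<And>L' w. (L', w) \<in> set P' \<longleftrightarrow> (L' = L0 \<and> w = []) \<or> (\<exists>L. (L, w) \<in> set P \<and> L' = Lp L)"
    unfolding P'_def by auto
  have Q1: "\<forall>(L, w) \<in> set P'. regular_on A' L \<and> length w \<le> 1"
  proof (intro ballI, clarify)
    fix L' w assume "(L', w) \<in> set P'"
    then have "(L' = L0 \<and> w = []) \<or> (\<exists>L. (L, w) \<in> set P \<and> L' = Lp L)" using memP' by blast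
    then show "regular_on A' L' \<and> length w \<le> 1"
    proof
      assume "L' = L0 \<and> w = []" then show ?thesis using L0_regular by simp
    next
      assume "\<exists>L. (L, w) \<in> set P \<and> L' = Lp L"
      then obtain L where "(L, w) \<in> set P" "L' = Lp L" by blast
      then show ?thesis using P1 Lp_regular by fastforce
    qed
  qed
  have fstP': "\<And>i. i < length P \<Longrightarrow> fst (P' ! Suc i) = Lp (fst (P ! i))"
    unfolding P'_def by (simp add: case_prod_beta)
  have fstP'0: "fst (P' ! 0) = L0" unfolding P'_def by simp
  have lenP': "length P' = Suc (length P)" unfolding P'_def by simp
  have dis0: "\<And>L. L0 \<inter> Lp L = {}" unfolding L0_def Lp_def by blast
  have Q2: "\<forall>i < length P'. \<forall>j < length P'. i \<noteq> j \<longrightarrow> fst (P' ! i) \<inter> fst (P' ! j) = {}"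
  proof (intro allI impI)
    fix i j assume i: "i < length P'" and j: "j < length P'" and ij: "i \<noteq> j"
    show "fst (P' ! i) \<inter> fst (P' ! j) = {}"
    proof (cases i)
      case 0
      then obtain j' where j': "j = Suc j'" using ij by (cases j) auto
      then show ?thesis using 0 fstP'0 fstP' dis0 j lenP' by simp
    next
      case (Suc i')
      show ?thesis
      proof (cases j)
        case 0
        then show ?thesis using Suc fstP'0 fstP' dis0 i lenP' by (simp add: Int_commute)
      next
        case (Suc j')
        have i': "i' < length P" and j'': "j' < length P" and ne: "i' \<noteq> j'"
          using \<open>i = Suc i'\<close> Suc i j ij lenP' by auto
        have "fst (P ! i') \<inter> fst (P ! j') = {}" using P2 i' j'' ne by blast
        then have "Lp (fst (P ! i')) \<inter> Lp (fst (P ! j')) = {}" unfolding Lp_def by blast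
        then show ?thesis using \<open>i = Suc i'\<close> Suc fstP' i' j'' by simp
      qed
    qed
  qed
  have Q3: "\<forall>U. (h' U = None \<longleftrightarrow> (\<forall>(L, w) \<in> set P'. U \<notin> L)) \<and> (\<forall>(L, w) \<in> set P'. U \<in> L \<longrightarrow> h' U = Some w)"
  proof
    fix U
    show "(h' U = None \<longleftrightarrow> (\<forall>(L, w) \<in> set P'. U \<notin> L)) \<and> (\<forall>(L, w) \<in> set P'. U \<in> L \<longrightarrow> h' U = Some w)"
    proof (cases "U \<in> lists A' \<and> I \<inter> co (map fst U) \<noteq> {}")
      case False
      have "h' U = None" unfolding h'_def if_not_P[OF False] ..
      moreover have "\<forall>(L, w) \<in> set P'. U \<notin> L"
      proof (intro ballI, clarify)
        fix L' w assume "(L', w) \<in> set P'" "U \<in> L'"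
        then show False using memP' False unfolding L0_def Lp_def by blast
      qed
      ultimately show ?thesis by auto
    next
      case cond: True
      show ?thesis
      proof (cases "valid U")
        case False
        have hU: "h' U = Some []" unfolding h'_def if_P[OF cond] if_not_P[OF False] ..
        have "U \<in> L0" using cond False unfolding L0_def by simp
        moreover have L0P: "(L0, []) \<in> set P'" unfolding P'_def by simp
        moreover have "\<forall>(L, w) \<in> set P'. U \<in> L \<longrightarrow> h' U = Some w"
        proof (intro ballI, clarify)
          fix L' w assume "(L', w) \<in> set P'" "U \<in> L'"
          then have "(L' = L0 \<and> w = []) \<or> (\<exists>L. (L, w) \<in> set P \<and> L' = Lp L)" using memP' by blast
          then show "h' U = Some w" using hU \<open>U \<in> L'\<close> False unfolding Lp_def by auto
        qed
        ultimately show ?thesis using hU by fastforce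
      next
        case True
        have hU: "h' U = h (DU U)" unfolding h'_def if_P[OF cond] if_P[OF True] ..
        have inLp: "\<And>L. U \<in> Lp L \<longleftrightarrow> DU U \<in> L" using cond True unfolding Lp_def by simp
        have nL0: "U \<notin> L0" using True unfolding L0_def by simp
        have A1: "(\<forall>(L, w) \<in> set P'. U \<notin> L) \<longleftrightarrow> (\<forall>(L, w) \<in> set P. DU U \<notin> L)"
        proof
          assume H: "\<forall>(L, w) \<in> set P'. U \<notin> L"
          show "\<forall>(L, w) \<in> set P. DU U \<notin> L"
          proof (intro ballI, clarify)
            fix L w assume "(L, w) \<in> set P" "DU U \<in> L"
            then have "(Lp L, w) \<in> set P'" "U \<in> Lp L" using memP' inLp by blast+
            then show False using H by blast
          qed
        next
          assume H: "\<forall>(L, w) \<in> set P. DU U \<notin> L"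
          show "\<forall>(L, w) \<in> set P'. U \<notin> L"
          proof (intro ballI, clarify)
            fix L' w assume "(L', w) \<in> set P'" "U \<in> L'"
            then have "(L' = L0 \<and> w = []) \<or> (\<exists>L. (L, w) \<in> set P \<and> L' = Lp L)" using memP' by blast
            then show False using H nL0 inLp \<open>U \<in> L'\<close> by blast
          qed
        qed
        have A2: "\<forall>(L, w) \<in> set P'. U \<in> L \<longrightarrow> h' U = Some w"
        proof (intro ballI, clarify)
          fix L' w assume "(L', w) \<in> set P'" "U \<in> L'"
          then have "(L' = L0 \<and> w = []) \<or> (\<exists>L. (L, w) \<in> set P \<and> L' = Lp L)" using memP' by blast
          then obtain L where L: "(L, w) \<in> set P" "L' = Lp L" using nL0 \<open>U \<in> L'\<close> by blast
          have "U \<in> Lp L" using L(2) \<open>U \<in> L'\<close> by simp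
          then have D: "DU U \<in> L" using inLp by simp
          have P3': "\<forall>(L, w)\<in>set P. DU U \<in> L \<longrightarrow> h (DU U) = Some w" using P3 by blast
          have "h (DU U) = Some w" using P3' L(1) D by fastforce
          then show "h' U = Some w" using hU by simp
        qed
        have "h (DU U) = None \<longleftrightarrow> (\<forall>(L, w) \<in> set P. DU U \<notin> L)" using P3 by (rule allE) (elim conjE)
        then show ?thesis using A1 A2 hU by simp
      qed
    qed
  qed
  show ?thesis unfolding simple_on_def using Q1 Q2 Q3 by blast
qed

end

theorem mainTheorem18:
  fixes g :: "'a::finite list \<Rightarrow> 'b::finite list option"
    and f :: "'b list \<Rightarrow> 'c::finite list option"
    and k :: nat
  assumes "k \<ge> 1" and "rational g" and "lex k f"
  shows "lex k (\<lambda>u. Option.bind (g u) f)"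
proof -
  obtain Q \<delta> I F \<mu> where nfa: "is_nfa UNIV Q \<delta> I F" and
    gdef: "\<forall>u. (g u = None \<longleftrightarrow> \<not> (\<exists>qs. is_run Q \<delta> I F u qs)) \<and>
          (\<forall>qs. is_run Q \<delta> I F u qs \<longrightarrow> g u = Some (run_output \<mu> u qs))"
    using assms(2) unfolding rational_def by blast
  obtain Ls h where Ls: "length Ls = k" "\<forall>(B, r) \<in> set Ls. finite B \<and> strict_linear_order_on B r"
    and hs: "simple_on (tuple_alphabet Ls) h" and fdef: "f = (\<lambda>u. lexmap Ls h (map (\<lambda>a. (a, [])) u))"
    using assms(3) unfolding lex_def by blast
  have finQ: "finite Q" and dQ: "\<delta> \<subseteq> Q \<times> UNIV \<times> Q" using nfa by (auto simp: is_nfa_def)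
  have "finite (Q \<times> (UNIV :: 'a set) \<times> Q)" using finQ by simp
  then have fd: "finite \<delta>" using dQ by (rule finite_subset[rotated])
  interpret C: comp Q \<delta> I F \<mu> Ls h
    by unfold_locales (use nfa fd Ls(2) in auto)
  have T_ok: "\<forall>(B, r) \<in> set (map C.T Ls). finite B \<and> strict_linear_order_on B r"
  proof (intro ballI, clarify)
    fix B' r' assume "(B', r') \<in> set (map C.T Ls)"
    then obtain B r where Br: "(B, r) \<in> set Ls" "(B', r') = C.T (B, r)" by auto
    have "finite B" "strict_linear_order_on B r" using Br(1) Ls(2) by auto
    then have "finite (Bp C.cmax B) \<and> strict_linear_order_on (Bp C.cmax B) (rp C.cmax B r)" by (rule rp_order)
    then show "finite B' \<and> strict_linear_order_on B' r'" using Br(2) unfolding C.T_def by simp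
  qed
  have eq: "(\<lambda>u. Option.bind (g u) f) = (\<lambda>u. lexmap (map C.T Ls) C.h' (map (\<lambda>a. (a, [])) u))"
  proof
    fix u :: "'a list"
    show "Option.bind (g u) f = lexmap (map C.T Ls) C.h' (map (\<lambda>a. (a, [])) u)"
    proof (cases "I \<inter> C.co u = {}")
      case True
      then have "g u = None" using gdef C.run_iff by blast
      moreover have "lexmap (map C.T Ls) C.h' (rows u []) = None"
        using C.none_case[OF True] by simp
      ultimately show ?thesis by (simp add: rows_nil)
    next
      case False
      let ?v = "concat (C.outs (C.rho0 u) u)"
      have "g u = Some ?v" using gdef C.canonical_run[OF False] by metis
      moreover have "lexmap (map C.T Ls) C.h' (rows u []) = lexmap Ls h (rows ?v [])"
        using C.main_case[OF False, of "[]" Ls "[]"] by simp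
      ultimately show ?thesis using fdef by (simp add: rows_nil)
    qed
  qed
  have sA: "simple_on (tuple_alphabet (map C.T Ls)) C.h'"
    using C.simple_h'[OF hs] unfolding C.A'_def .
  show ?thesis unfolding lex_def eq
    using Ls(1) T_ok sA by (intro exI[of _ "map C.T Ls"] exI[of _ C.h']) simp
qed

end
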